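(* Let $L>0$, $h^*>0$, $g>0$, $\mu>0$, $\sigma>0$ and $\bar\kappa\ge 0$ be constants, let $c=\sqrt{gh^*}$, and let $\bar S=\{\varphi\in H^2(0,L):\varphi'(0)=\varphi'(L)=0\}$. There exist constants $\bar M,\bar\lambda,\Gamma>0$ such that for every $f\in C^0(\mathbb{R}_+)$ and every function $$\varphi\in C^0(\mathbb{R}_+;\bar S\cap H^4(0,L))\cap C^1(\mathbb{R}_+;\bar S)\cap C^2(\mathbb{R}_+;L^2(0,L))$$ that satisfies for all $t\ge0$ $$\varphi_{tt}=c^2\varphi_{xx}-\sigma h^*\varphi_{xxxx}+\mu\varphi_{txx}-\bar\kappa\varphi_t \ \text{ on } (0,L),$$ $$\varphi_x(t,0)=\varphi_x(t,L)=0,\qquad \varphi_{xxx}(t,0)=\varphi_{xxx}(t,L)=-\sigma^{-1}f(t),$$ $$\int_0^L\varphi(t,x)\,dx=\int_0^L\varphi_t(t,x)\,dx=0,$$ the following estimate holds for all $t\ge 0$: $$P(t)\le \bar M\exp(-\bar\lambda t)P(0)+\Gamma\max_{0\le s\le t}\big(\exp(-\bar\lambda(t-s))|f(s)|\big),$$ where $P(t):=\big(\|\varphi[t]\|_2^2+\|\varphi_x[t]\|_2^2+\|\varphi_{xx}[t]\|_2^2+\|\varphi_t[t]\|_2^2\big)^{1/2}$.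
   Context: $\mathbb{R}_+=[0,+\infty)$. For a function $\varphi$ of $(t,x)$, $\varphi[t]$ denotes the profile $x\mapsto\varphi(t,x)$, and $\|\cdot\|_2$ is the $L^2(0,L)$ norm. For a normed space $Y$, $C^k(\mathbb{R}_+;Y)$ denotes $k$-times continuously differentiable maps $\mathbb{R}_+\to Y$; time derivatives (and mixed derivatives) are understood as derivatives of the maps $t\mapsto\varphi[t]$ (resp. $t\mapsto\varphi_{xx}[t]$) in the corresponding function spaces; $x$-derivatives are weak spatial derivatives. $H^k(0,L)$ is the usual Sobolev space. *)

theory Defs
  imports "HOL-Analysis.Analysis"
begin

definition in_L2 :: "real \<Rightarrow> (real \<Rightarrow> real) \<Rightarrow> bool" where
  "in_L2 L u \<longleftrightarrow> set_borel_measurable lborel {0..L} u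
      \<and> set_integrable lborel {0..L} (\<lambda>x. (u x)^2)"

definition norm2 :: "real \<Rightarrow> (real \<Rightarrow> real) \<Rightarrow> real" where
  "norm2 L u = sqrt (LINT x:{0..L}|lborel. (u x)^2)"

definition test_fun :: "real \<Rightarrow> (real \<Rightarrow> real) \<Rightarrow> bool" where
  "test_fun L \<psi> \<longleftrightarrow> (\<forall>n x. (deriv ^^ n) \<psi> differentiable (at x))
      \<and> (\<exists>a b. 0 < a \<and> a < b \<and> b < L \<and> (\<forall>x. x \<notin> {a..b} \<longrightarrow> \<psi> x = 0))"

definition weak_deriv :: "real \<Rightarrow> (real \<Rightarrow> real) \<Rightarrow> (real \<Rightarrow> real) \<Rightarrow> bool" where
  "weak_deriv L u v \<longleftrightarrow> set_integrable lborel {0..L} u \<and> set_integrable lborel {0..L} v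
      \<and> (\<forall>\<psi>. test_fun L \<psi> \<longrightarrow>
            (LINT x:{0..L}|lborel. u x * deriv \<psi> x) = - (LINT x:{0..L}|lborel. v x * \<psi> x))"

text \<open>H^k distance, where u i, v i are the i-th (weak) x-derivatives.\<close>
definition Hk_dist :: "real \<Rightarrow> nat \<Rightarrow> (nat \<Rightarrow> real \<Rightarrow> real) \<Rightarrow> (nat \<Rightarrow> real \<Rightarrow> real) \<Rightarrow> real" where
  "Hk_dist L k u v = sqrt (\<Sum>i\<le>k. (norm2 L (\<lambda>x. u i x - v i x))^2)"

end

theory Submission
  imports Defs
begin

definition NL :: "real \<Rightarrow> real measure" where
  "NL L = restrict_space lborel {0..L}"

lemma space_NL[simp]: "space (NL L) = {0..L}"
  by (simp add: NL_def space_restrict_space)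

lemma sets_NL: "sets (NL L) = sets (restrict_space borel {0..L})"
  unfolding NL_def by (rule sets_restrict_space_cong) simp

lemma LINT_NL: fixes f :: "real \<Rightarrow> real" shows "(LINT x:{0..L}|lborel. f x) = integral\<^sup>L (NL L) f"
  unfolding NL_def set_lebesgue_integral_def
  using integral_restrict_space[of "{0..L}" lborel f] by simp

lemma seti_NL: fixes f :: "real \<Rightarrow> real" shows "set_integrable lborel {0..L} f \<longleftrightarrow> integrable (NL L) f"
  unfolding NL_def using set_integrable_eq[of "{0..L}" lborel f] by simp

lemma sbm_NL: fixes f :: "real \<Rightarrow> real" shows "set_borel_measurable lborel {0..L} f \<longleftrightarrow> f \<in> borel_measurable (NL L)"
  unfolding NL_def set_borel_measurable_def
  using borel_measurable_restrict_space_iff[of "{0..L}" lborel f] by simp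

lemma finite_NL: "finite_measure (NL L)"
proof (rule finite_measureI)
  show "emeasure (NL L) (space (NL L)) \<noteq> \<infinity>"
    unfolding NL_def by (cases "0 \<le> L") (simp_all add: emeasure_restrict_space space_restrict_space)
qed

lemma emeasure_NL: "0 \<le> L \<Longrightarrow> emeasure (NL L) {0..L} = ennreal L"
  unfolding NL_def by (subst emeasure_restrict_space) auto

lemma measure_NL: "0 \<le> L \<Longrightarrow> measure (NL L) {0..L} = L"
  unfolding measure_def using emeasure_NL by simp

lemma integral_const_NL: "0 \<le> L \<Longrightarrow> integral\<^sup>L (NL L) (\<lambda>x. c) = L * c"
proof -
  interpret finite_measure "NL L" by (rule finite_NL)
  assume "0 \<le> L" then show ?thesis using measure_NL[of L] by simp
qed

lemma integrable_const_NL[simp]: "integrable (NL L) (\<lambda>x. c::real)"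
proof -
  interpret finite_measure "NL L" by (rule finite_NL)
  show ?thesis by simp
qed

lemma cont_meas_NL: "continuous_on {0..L} f \<Longrightarrow> (f::real\<Rightarrow>real) \<in> borel_measurable (NL L)"
  unfolding NL_def
  by (metis borel_measurable_continuous_on_restrict measurable_lborel1 sets_lborel sets_restrict_space_cong measurable_cong_sets)

lemma abs_prod_le: "\<bar>a*b\<bar> \<le> a^2 + (b::real)^2"
proof -
  have "0 \<le> (\<bar>a\<bar> - \<bar>b\<bar>)^2" by simp
  then have "2*\<bar>a\<bar>*\<bar>b\<bar> \<le> \<bar>a\<bar>^2 + \<bar>b\<bar>^2" by (simp add: power2_diff)
  moreover have "\<bar>a\<bar>^2 = a^2" "\<bar>b\<bar>^2 = b^2" by simp_all
  moreover have "0 \<le> \<bar>a\<bar>*\<bar>b\<bar>" by simp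
  ultimately show ?thesis unfolding abs_mult by linarith
qed

definition L2 :: "real \<Rightarrow> (real \<Rightarrow> real) \<Rightarrow> bool" where
  "L2 L u \<longleftrightarrow> u \<in> borel_measurable (NL L) \<and> integrable (NL L) (\<lambda>x. (u x)^2)"

lemma in_L2_iff: "in_L2 L u \<longleftrightarrow> L2 L u"
  unfolding in_L2_def L2_def sbm_NL seti_NL ..

lemma L2_meas: "L2 L u \<Longrightarrow> u \<in> borel_measurable (NL L)"
  by (simp add: L2_def)

lemma L2_sq: "L2 L u \<Longrightarrow> integrable (NL L) (\<lambda>x. (u x)^2)"
  by (simp add: L2_def)

lemma L2_prod: assumes "L2 L u" "L2 L v"
  shows "integrable (NL L) (\<lambda>x. u x * v x)"
proof (rule Bochner_Integration.integrable_bound)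
  show "integrable (NL L) (\<lambda>x. (u x)^2 + (v x)^2)"
    using assms by (auto simp: L2_def)
  show "(\<lambda>x. u x * v x) \<in> borel_measurable (NL L)" using assms by (auto simp: L2_def)
  show "AE x in NL L. norm (u x * v x) \<le> norm ((u x)^2 + (v x)^2)"
    using abs_prod_le by simp
qed

lemma L2_const: "L2 L (\<lambda>x. c)"
  unfolding L2_def by simp

lemma L2_int: assumes "L2 L u" shows "integrable (NL L) u"
  using L2_prod[OF assms L2_const[of L 1]] by simp

lemma L2_add: assumes "L2 L u" "L2 L v" shows "L2 L (\<lambda>x. u x + v x)"
proof -
  have [measurable]: "u \<in> borel_measurable (NL L)" "v \<in> borel_measurable (NL L)"
    using assms by (auto simp: L2_def)
  have "integrable (NL L) (\<lambda>x. (u x)^2 + (v x)^2 + 2 * (u x * v x))"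
    using assms L2_prod[OF assms] by (auto simp: L2_def)
  moreover have "(\<lambda>x. (u x)^2 + (v x)^2 + 2 * (u x * v x)) = (\<lambda>x. (u x + v x)^2)"
    by (auto simp: power2_sum algebra_simps)
  ultimately show ?thesis unfolding L2_def by simp
qed

lemma L2_scale: assumes "L2 L u" shows "L2 L (\<lambda>x. c * u x)"
proof -
  have [measurable]: "u \<in> borel_measurable (NL L)"
    using assms by (auto simp: L2_def)
  have "(\<lambda>x. c * u x) \<in> borel_measurable (NL L)" by measurable
  then show ?thesis using assms unfolding L2_def by (simp add: power_mult_distrib)
qed

lemma L2_minus: assumes "L2 L u" shows "L2 L (\<lambda>x. - u x)"
  using L2_scale[OF assms, of "-1"] by simp

lemma L2_diff: assumes "L2 L u" "L2 L v" shows "L2 L (\<lambda>x. u x - v x)"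
  using L2_add[OF assms(1) L2_minus[OF assms(2)]] by simp

lemma L2_div: assumes "L2 L u" shows "L2 L (\<lambda>x. u x / c)"
  using L2_scale[OF assms, of "1/c"] by simp

definition ip :: "real \<Rightarrow> (real \<Rightarrow> real) \<Rightarrow> (real \<Rightarrow> real) \<Rightarrow> real" where
  "ip L u v = integral\<^sup>L (NL L) (\<lambda>x. u x * v x)"

lemma ip_comm: "ip L u v = ip L v u"
  unfolding ip_def by (simp add: mult.commute)

lemma ip_self_nonneg: "0 \<le> ip L u u"
  unfolding ip_def by (intro integral_nonneg_AE AE_I2) simp

lemma norm2_ip: "norm2 L u = sqrt (ip L u u)"
  unfolding norm2_def ip_def LINT_NL by (simp add: power2_eq_square)

lemma norm2_sq: "(norm2 L u)^2 = ip L u u"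
  by (simp add: norm2_ip ip_self_nonneg)

lemma norm2_nonneg: "0 \<le> norm2 L u"
  by (simp add: norm2_ip ip_self_nonneg)

lemma ip_add_left: "L2 L u \<Longrightarrow> L2 L v \<Longrightarrow> L2 L w \<Longrightarrow> ip L (\<lambda>x. u x + v x) w = ip L u w + ip L v w"
  unfolding ip_def by (simp add: distrib_right L2_prod)

lemma ip_diff_left: "L2 L u \<Longrightarrow> L2 L v \<Longrightarrow> L2 L w \<Longrightarrow> ip L (\<lambda>x. u x - v x) w = ip L u w - ip L v w"
  unfolding ip_def by (simp add: left_diff_distrib L2_prod)

lemma ip_scale_left: "ip L (\<lambda>x. c * u x) w = c * ip L u w"
  unfolding ip_def by (simp add: mult.assoc)

lemma ip_add_right: "L2 L u \<Longrightarrow> L2 L v \<Longrightarrow> L2 L w \<Longrightarrow> ip L w (\<lambda>x. u x + v x) = ip L w u + ip L w v"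
  by (simp add: ip_comm[of L w] ip_add_left)

lemma ip_diff_right: "L2 L u \<Longrightarrow> L2 L v \<Longrightarrow> L2 L w \<Longrightarrow> ip L w (\<lambda>x. u x - v x) = ip L w u - ip L w v"
  by (simp add: ip_comm[of L w] ip_diff_left)

lemma ip_scale_right: "ip L w (\<lambda>x. c * u x) = c * ip L w u"
  by (simp add: ip_comm[of L w] ip_scale_left)

lemma ip_CS_sq: assumes "L2 L u" "L2 L v"
  shows "(ip L u v)^2 \<le> ip L u u * ip L v v"
proof -
  have key: "0 \<le> ip L u u * t^2 - 2 * t * ip L u v + ip L v v" for t
  proof -
    have "0 \<le> integral\<^sup>L (NL L) (\<lambda>x. (t * u x - v x)^2)"
      by (rule integral_nonneg_AE) simp
    also have "\<dots> = integral\<^sup>L (NL L) (\<lambda>x. t^2 * (u x * u x) - 2 * t * (u x * v x) + v x * v x)"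
      by (rule Bochner_Integration.integral_cong) (auto simp: power2_eq_square algebra_simps)
    also have "\<dots> = ip L u u * t^2 - 2 * t * ip L u v + ip L v v"
      unfolding ip_def using L2_prod[OF assms(1) assms(1)] L2_prod[OF assms(1) assms(2)] L2_prod[OF assms(2) assms(2)]
      by (simp add: mult.commute)
    finally show ?thesis .
  qed
  show ?thesis
  proof (cases "ip L u u = 0")
    case True
    have "ip L u v = 0"
    proof (rule ccontr)
      assume ne: "ip L u v \<noteq> 0"
      have "0 \<le> ip L u u * ((ip L v v + 1) / (2 * ip L u v))^2 - 2 * ((ip L v v + 1) / (2 * ip L u v)) * ip L u v + ip L v v"
        by (rule key)
      moreover have "2 * ((ip L v v + 1) / (2 * ip L u v)) * ip L u v = ip L v v + 1" using ne by (simp add: field_simps)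
      ultimately show False using True by simp
    qed
    then show ?thesis by (simp add: True)
  next
    case False
    then have pos: "0 < ip L u u" using ip_self_nonneg[of L u] by simp
    have "0 \<le> ip L u u * (ip L u v / ip L u u)^2 - 2 * (ip L u v / ip L u u) * ip L u v + ip L v v"
      by (rule key)
    also have "\<dots> = ip L v v - (ip L u v)^2 / ip L u u"
      using pos by (simp add: field_simps power2_eq_square)
    finally have "(ip L u v)^2 / ip L u u \<le> ip L v v" by simp
    then show ?thesis using pos by (simp add: field_simps mult.commute)
  qed
qed

lemma ip_CS: assumes "L2 L u" "L2 L v"
  shows "\<bar>ip L u v\<bar> \<le> norm2 L u * norm2 L v"
proof -
  have "\<bar>ip L u v\<bar> = sqrt ((ip L u v)^2)" by simp
  also have "\<dots> \<le> sqrt (ip L u u * ip L v v)" using ip_CS_sq[OF assms] by (rule real_sqrt_le_mono)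
  also have "\<dots> = norm2 L u * norm2 L v" by (simp add: norm2_ip real_sqrt_mult)
  finally show ?thesis .
qed

definition smooth :: "(real \<Rightarrow> real) \<Rightarrow> bool" where
  "smooth f \<longleftrightarrow> (\<forall>n x. (deriv ^^ n) f differentiable (at x))"

lemma deriv_Suc: "(deriv ^^ Suc n) f = (deriv ^^ n) (deriv f)"
  by (simp only: funpow_Suc_right o_apply)

declare funpow.simps(2)[simp del]
declare deriv_Suc[simp]

lemma smooth_differentiable: "smooth f \<Longrightarrow> f differentiable (at x)"
  unfolding smooth_def by (metis funpow_0)

lemma smooth_DERIV: "smooth f \<Longrightarrow> (f has_real_derivative deriv f x) (at x)"
  using smooth_differentiable DERIV_deriv_iff_real_differentiable by blast

lemma smooth_deriv: "smooth f \<Longrightarrow> smooth (deriv f)"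
  unfolding smooth_def by (metis deriv_Suc)

lemma smooth_cont: "smooth f \<Longrightarrow> continuous_on S f"
  by (meson continuous_at_imp_continuous_on differentiable_imp_continuous_within smooth_differentiable)

lemma smoothI:
  assumes "\<And>x. (f has_real_derivative g x) (at x)" "smooth g"
  shows "smooth f"
proof -
  have d: "deriv f = g" using assms(1) DERIV_imp_deriv by blast
  show ?thesis unfolding smooth_def
  proof (intro allI)
    fix n x show "(deriv ^^ n) f differentiable (at x)"
    proof (cases n)
      case 0 then show ?thesis using assms(1) real_differentiable_def by auto
    next
      case (Suc m) then show ?thesis using assms(2) unfolding smooth_def by (simp add: deriv_Suc d)
    qed
  qed
qed

lemma deriv_add_fun:
  fixes f g :: "real \<Rightarrow> real"
  assumes "\<And>x. f differentiable (at x)" "\<And>x. g differentiable (at x)"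
  shows "deriv (\<lambda>x. f x + g x) = (\<lambda>x. deriv f x + deriv g x)"
proof
  fix x
  have "((\<lambda>x. f x + g x) has_real_derivative deriv f x + deriv g x) (at x)"
    using assms DERIV_deriv_iff_real_differentiable by (blast intro: DERIV_add)
  then show "deriv (\<lambda>x. f x + g x) x = deriv f x + deriv g x" by (rule DERIV_imp_deriv)
qed

lemma deriv_mult_fun:
  fixes f g :: "real \<Rightarrow> real"
  assumes "\<And>x. f differentiable (at x)" "\<And>x. g differentiable (at x)"
  shows "deriv (\<lambda>x. f x * g x) = (\<lambda>x. deriv f x * g x + f x * deriv g x)"
proof
  fix x
  have "((\<lambda>x. f x * g x) has_real_derivative deriv f x * g x + f x * deriv g x) (at x)"
    using DERIV_mult[OF DERIV_deriv_iff_real_differentiable[THEN iffD2, OF assms(1)]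
                        DERIV_deriv_iff_real_differentiable[THEN iffD2, OF assms(2)]]
    by (simp add: mult.commute)
  then show "deriv (\<lambda>x. f x * g x) x = deriv f x * g x + f x * deriv g x" by (rule DERIV_imp_deriv)
qed

lemma higher_deriv_add:
  fixes f g :: "real \<Rightarrow> real"
  assumes "\<forall>k<n. \<forall>x. (deriv ^^ k) f differentiable (at x)"
      and "\<forall>k<n. \<forall>x. (deriv ^^ k) g differentiable (at x)"
  shows "(deriv ^^ n) (\<lambda>x. f x + g x) = (\<lambda>x. (deriv ^^ n) f x + (deriv ^^ n) g x)"
  using assms
proof (induction n arbitrary: f g)
  case 0 then show ?case by simp
next
  case (Suc n)
  have f0: "\<And>x. f differentiable (at x)" and g0: "\<And>x. g differentiable (at x)"
    using Suc.prems[rule_format, of 0] by auto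
  have a1: "\<forall>k<n. \<forall>x. (deriv ^^ k) (deriv f) differentiable (at x)"
    using Suc.prems(1) by (metis Suc_mono deriv_Suc)
  have a2: "\<forall>k<n. \<forall>x. (deriv ^^ k) (deriv g) differentiable (at x)"
    using Suc.prems(2) by (metis Suc_mono deriv_Suc)
  have "(deriv ^^ Suc n) (\<lambda>x. f x + g x) = (deriv ^^ n) (\<lambda>x. deriv f x + deriv g x)"
    by (simp add: deriv_Suc deriv_add_fun[OF f0 g0])
  also have "\<dots> = (\<lambda>x. (deriv ^^ n) (deriv f) x + (deriv ^^ n) (deriv g) x)"
    by (rule Suc.IH[OF a1 a2])
  finally show ?case by (simp add: deriv_Suc)
qed

lemma smooth_add: "smooth f \<Longrightarrow> smooth g \<Longrightarrow> smooth (\<lambda>x. f x + g x)"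
  unfolding smooth_def by (subst higher_deriv_add) (auto intro: differentiable_add)

lemma smooth_mult_aux:
  "\<forall>f g. smooth f \<longrightarrow> smooth g \<longrightarrow> (\<forall>k\<le>n. \<forall>x. (deriv ^^ k) (\<lambda>x. f x * g x) differentiable (at x))"
proof (induction n)
  case 0
  then show ?case by (auto intro: differentiable_mult smooth_differentiable)
next
  case (Suc n)
  show ?case
  proof (intro allI impI)
    fix f g k x assume f: "smooth f" and g: "smooth g" and k: "k \<le> Suc n"
    show "(deriv ^^ k) (\<lambda>x. f x * g x) differentiable (at x)"
    proof (cases "k \<le> n")
      case True then show ?thesis using Suc.IH f g by blast
    next
      case False
      then have kk: "k = Suc n" using k by simp
      have f': "smooth (deriv f)" and g': "smooth (deriv g)" using f g smooth_deriv by auto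
      have A: "\<forall>k\<le>n. \<forall>x. (deriv ^^ k) (\<lambda>x. deriv f x * g x) differentiable (at x)"
        using Suc.IH f' g by blast
      have B: "\<forall>k\<le>n. \<forall>x. (deriv ^^ k) (\<lambda>x. f x * deriv g x) differentiable (at x)"
        using Suc.IH f g' by blast
      have "(deriv ^^ k) (\<lambda>x. f x * g x) = (deriv ^^ n) (\<lambda>x. deriv f x * g x + f x * deriv g x)"
        using kk by (simp add: deriv_Suc deriv_mult_fun[OF smooth_differentiable[OF f] smooth_differentiable[OF g]])
      also have "\<dots> = (\<lambda>x. (deriv ^^ n) (\<lambda>x. deriv f x * g x) x + (deriv ^^ n) (\<lambda>x. f x * deriv g x) x)"
        by (rule higher_deriv_add) (use A B in auto)
      finally show ?thesis using A B by (auto intro: differentiable_add)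
    qed
  qed
qed

lemma smooth_mult: "smooth f \<Longrightarrow> smooth g \<Longrightarrow> smooth (\<lambda>x. f x * g x)"
  unfolding smooth_def[of "\<lambda>x. f x * g x"] using smooth_mult_aux by blast

lemma higher_deriv_affine:
  assumes "smooth f"
  shows "(deriv ^^ n) (\<lambda>x. c * f (a * x + b)) = (\<lambda>x. c * a ^ n * (deriv ^^ n) f (a * x + b))"
  using assms
proof (induction n arbitrary: f c)
  case 0 then show ?case by simp
next
  case (Suc n)
  have d: "deriv (\<lambda>x. c * f (a * x + b)) = (\<lambda>x. (c * a) * deriv f (a * x + b))"
  proof
    fix x
    have "((\<lambda>x. c * f (a * x + b)) has_real_derivative c * (deriv f (a * x + b) * a)) (at x)"
      by (rule DERIV_cmult, rule DERIV_chain2[OF smooth_DERIV[OF Suc.prems]])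
         (auto intro!: derivative_eq_intros)
    then show "deriv (\<lambda>x. c * f (a * x + b)) x = (c * a) * deriv f (a * x + b)"
      by (subst DERIV_imp_deriv) (auto simp: algebra_simps)
  qed
  show ?case
    by (simp only: deriv_Suc d Suc.IH[OF smooth_deriv[OF Suc.prems]]) (simp add: algebra_simps)
qed

lemma smooth_affine: assumes "smooth f" shows "smooth (\<lambda>x. c * f (a * x + b))"
  unfolding smooth_def
proof (intro allI)
  fix n x
  have "((deriv ^^ n) f \<circ> (\<lambda>x. a * x + b)) differentiable (at x)"
    using assms unfolding smooth_def
    by (intro differentiable_chain_at) (auto intro!: derivative_intros)
  then have "(\<lambda>x. c * a ^ n * (deriv ^^ n) f (a * x + b)) differentiable (at x)"
    by (intro differentiable_mult differentiable_const) (simp_all add: o_def)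
  then show "(deriv ^^ n) (\<lambda>x. c * f (a * x + b)) differentiable (at x)"
    by (simp add: higher_deriv_affine[OF assms])
qed

lemma smooth_scale: "smooth f \<Longrightarrow> smooth (\<lambda>x. c * f x)"
  using smooth_affine[of f c 1 0] by simp

lemma smooth_const: "smooth (\<lambda>x. c)"
  unfolding smooth_def
proof (intro allI)
  fix n x
  have "(deriv ^^ n) (\<lambda>x. c) = (\<lambda>x. if n = 0 then c else 0)"
  proof (induction n)
    case 0 then show ?case by simp
  next
    case (Suc n)
    have "deriv (\<lambda>x::real. c) = (\<lambda>x. 0)" by (intro ext DERIV_imp_deriv) simp
    moreover have "(deriv ^^ n) (\<lambda>x::real. 0::real) = (\<lambda>x. 0)"
      by (induction n) (auto intro!: ext DERIV_imp_deriv)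
    ultimately show ?case by (simp add: deriv_Suc)
  qed
  then show "(deriv ^^ n) (\<lambda>x. c) differentiable (at x)" by simp
qed

definition hP :: "real poly \<Rightarrow> real \<Rightarrow> real" where
  "hP P x = (if x > 0 then poly P (1/x) * exp (-(1/x)) else 0)"

definition nextP :: "real poly \<Rightarrow> real poly" where
  "nextP P = [:0,0,1:] * (P - pderiv P)"

lemma poly_exp_lim: "((\<lambda>y. poly (R::real poly) y * exp (-y)) \<longlongrightarrow> 0) at_top"
proof -
  have "((\<lambda>y. \<Sum>i\<le>degree R. coeff R i * (y ^ i / exp y)) \<longlongrightarrow> (\<Sum>i\<le>degree R. coeff R i * 0)) at_top"
    by (intro tendsto_sum tendsto_mult tendsto_const tendsto_power_div_exp_0)
  moreover have "(\<lambda>y. \<Sum>i\<le>degree R. coeff R i * (y ^ i / exp y)) = (\<lambda>y. poly R y * exp (-y))"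
    by (simp add: poly_altdef sum_distrib_right exp_minus divide_inverse mult.assoc)
  ultimately show ?thesis by simp
qed

lemma hP_deriv_pos:
  assumes "x > 0"
  shows "(hP P has_real_derivative hP (nextP P) x) (at x)"
proof -
  have d: "((\<lambda>x. poly P (1/x) * exp (-(1/x))) has_real_derivative
        poly (pderiv P) (1/x) * (- 1 / x^2) * exp (-(1/x)) + poly P (1/x) * (exp (-(1/x)) * (1 / x^2))) (at x)"
    using assms
    by (auto intro!: derivative_eq_intros DERIV_chain2[OF poly_DERIV]
             simp: power2_eq_square field_simps)
  have "poly (pderiv P) (1/x) * (- 1 / x^2) * exp (-(1/x)) + poly P (1/x) * (exp (-(1/x)) * (1 / x^2))
        = hP (nextP P) x"
    using assms by (simp add: hP_def nextP_def power2_eq_square field_simps)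
  with d have d2: "((\<lambda>x. poly P (1/x) * exp (-(1/x))) has_real_derivative hP (nextP P) x) (at x)"
    by simp
  show ?thesis
    by (rule has_field_derivative_transform_within_open[OF d2, of "{0<..}"])
       (use assms in \<open>auto simp: hP_def\<close>)
qed

lemma hP_deriv_neg:
  assumes "x < 0"
  shows "(hP P has_real_derivative hP (nextP P) x) (at x)"
proof -
  have "((\<lambda>x. 0) has_real_derivative 0) (at x)" by simp
  then have "(hP P has_real_derivative 0) (at x)"
    by (rule has_field_derivative_transform_within_open[of _ _ _ "{..<0}"])
       (use assms in \<open>auto simp: hP_def\<close>)
  then show ?thesis using assms by (simp add: hP_def)
qed

lemma hP_deriv_zero:
  "(hP P has_real_derivative hP (nextP P) 0) (at 0)"
proof -
  have "((\<lambda>h. (hP P (0 + h) - hP P 0) / h) \<longlongrightarrow> 0) (at 0)"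
    unfolding filterlim_at_split
  proof
    show "((\<lambda>h. (hP P (0 + h) - hP P 0) / h) \<longlongrightarrow> 0) (at_left 0)"
    proof (rule tendsto_cong[THEN iffD1, of "\<lambda>h. 0"])
      show "\<forall>\<^sub>F x in at_left 0. 0 = (hP P (0 + x) - hP P 0) / x"
        unfolding eventually_at_left_field
        by (intro exI[of _ "-1"]) (auto simp: hP_def)
    qed simp
  next
    have lim: "((\<lambda>h. poly ([:0,1:] * P) (inverse h) * exp (- inverse h)) \<longlongrightarrow> 0) (at_right 0)"
      by (rule filterlim_compose[OF poly_exp_lim filterlim_inverse_at_top_right])
    show "((\<lambda>h. (hP P (0 + h) - hP P 0) / h) \<longlongrightarrow> 0) (at_right 0)"
    proof (rule tendsto_cong[THEN iffD1, OF _ lim])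
      show "\<forall>\<^sub>F x in at_right 0. poly ([:0,1:] * P) (inverse x) * exp (- inverse x) = (hP P (0 + x) - hP P 0) / x"
        unfolding eventually_at_right_field
        by (intro exI[of _ 1]) (auto simp: hP_def field_simps)
    qed
  qed
  then show ?thesis unfolding DERIV_def by (simp add: hP_def)
qed

lemma hP_deriv: "(hP P has_real_derivative hP (nextP P) x) (at x)"
  using hP_deriv_pos hP_deriv_neg hP_deriv_zero by (cases x "0::real" rule: linorder_cases) auto

lemma hP_higher: "(deriv ^^ n) (hP P) = hP ((nextP ^^ n) P)"
proof (induction n arbitrary: P)
  case 0 then show ?case by simp
next
  case (Suc n)
  have "deriv (hP P) = hP (nextP P)" by (intro ext DERIV_imp_deriv hP_deriv)
  then show ?case by (simp add: Suc.IH funpow_Suc_right)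
qed

lemma smooth_hP: "smooth (hP P)"
  unfolding smooth_def hP_higher
  using hP_deriv real_differentiable_def by blast

definition beta :: "real \<Rightarrow> real" where "beta = hP 1"

lemma smooth_beta: "smooth beta" unfolding beta_def by (rule smooth_hP)

lemma beta_pos: "x > 0 \<Longrightarrow> beta x > 0" by (simp add: beta_def hP_def)
lemma beta_zero: "x \<le> 0 \<Longrightarrow> beta x = 0" by (simp add: beta_def hP_def)
lemma beta_nonneg: "beta x \<ge> 0" by (simp add: beta_def hP_def)

definition bump :: "real \<Rightarrow> real \<Rightarrow> real \<Rightarrow> real" where
  "bump a b x = beta (x - a) * beta (b - x)"

lemma smooth_bump: "smooth (bump a b)"
proof -
  have 1: "smooth (\<lambda>x. 1 * beta (1 * x + - a))" by (rule smooth_affine[OF smooth_beta])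
  have 2: "smooth (\<lambda>x. 1 * beta ((-1) * x + b))" by (rule smooth_affine[OF smooth_beta])
  have "smooth (\<lambda>x. (1 * beta (1 * x + - a)) * (1 * beta ((-1) * x + b)))"
    by (rule smooth_mult[OF 1 2])
  then show ?thesis unfolding bump_def by simp
qed

lemma bump_pos: "a < x \<Longrightarrow> x < b \<Longrightarrow> bump a b x > 0"
  by (simp add: bump_def beta_pos)
lemma bump_nonneg: "bump a b x \<ge> 0"
  by (simp add: bump_def beta_nonneg)
lemma bump_out: "x \<notin> {a<..<b} \<Longrightarrow> bump a b x = 0"
  by (auto simp: bump_def beta_zero)

lemma test_fun_iff: "test_fun L \<psi> \<longleftrightarrow> smooth \<psi> \<and> (\<exists>a b. 0 < a \<and> a < b \<and> b < L \<and> (\<forall>x. x \<notin> {a..b} \<longrightarrow> \<psi> x = 0))"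
  unfolding test_fun_def smooth_def ..

lemma test_bump: assumes "0 < a" "a < b" "b < L" shows "test_fun L (bump a b)"
proof -
  have "\<forall>x. x \<notin> {a..b} \<longrightarrow> bump a b x = 0" by (auto intro!: bump_out)
  then show ?thesis unfolding test_fun_iff using smooth_bump assms by blast
qed

lemma test_smooth: "test_fun L \<psi> \<Longrightarrow> smooth \<psi>"
  by (simp add: test_fun_iff)

lemma test_supp: "test_fun L \<psi> \<Longrightarrow> \<exists>a b. 0 < a \<and> a < b \<and> b < L \<and> (\<forall>x. x \<notin> {a..b} \<longrightarrow> \<psi> x = 0)"
  by (simp add: test_fun_iff)

lemma test_add: assumes "test_fun L \<phi>" "test_fun L \<psi>" shows "test_fun L (\<lambda>x. \<phi> x + \<psi> x)"
proof -
  obtain a1 b1 where 1: "0 < a1" "a1 < b1" "b1 < L" "\<forall>x. x \<notin> {a1..b1} \<longrightarrow> \<phi> x = 0"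
    using test_supp[OF assms(1)] by blast
  obtain a2 b2 where 2: "0 < a2" "a2 < b2" "b2 < L" "\<forall>x. x \<notin> {a2..b2} \<longrightarrow> \<psi> x = 0"
    using test_supp[OF assms(2)] by blast
  have "\<forall>x. x \<notin> {min a1 a2..max b1 b2} \<longrightarrow> \<phi> x + \<psi> x = 0"
  proof (intro allI impI)
    fix x assume "x \<notin> {min a1 a2..max b1 b2}"
    then have "x \<notin> {a1..b1}" "x \<notin> {a2..b2}" by auto
    then show "\<phi> x + \<psi> x = 0" using 1(4) 2(4) by simp
  qed
  moreover have "0 < min a1 a2" "min a1 a2 < max b1 b2" "max b1 b2 < L" using 1 2 by auto
  ultimately show ?thesis unfolding test_fun_iff
    using smooth_add[OF test_smooth[OF assms(1)] test_smooth[OF assms(2)]] by blast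
qed

lemma test_scale: assumes "test_fun L \<phi>" shows "test_fun L (\<lambda>x. c * \<phi> x)"
proof -
  obtain a1 b1 where 1: "0 < a1" "a1 < b1" "b1 < L" "\<forall>x. x \<notin> {a1..b1} \<longrightarrow> \<phi> x = 0"
    using test_supp[OF assms(1)] by blast
  have "\<forall>x. x \<notin> {a1..b1} \<longrightarrow> c * \<phi> x = 0" using 1(4) by auto
  then show ?thesis unfolding test_fun_iff
    using smooth_scale[OF test_smooth[OF assms(1)]] 1 by blast
qed

lemma test_diff: assumes "test_fun L \<phi>" "test_fun L \<psi>" shows "test_fun L (\<lambda>x. \<phi> x - \<psi> x)"
  using test_add[OF assms(1) test_scale[OF assms(2), of "-1"]] by simp

lemma test_cont: "test_fun L \<psi> \<Longrightarrow> continuous_on S \<psi>"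
  using smooth_cont test_smooth by blast

lemma test_deriv_cont: "test_fun L \<psi> \<Longrightarrow> continuous_on S (deriv \<psi>)"
  using smooth_cont smooth_deriv test_smooth by blast

lemma test_zero_ends: assumes "test_fun L \<psi>" shows "\<psi> 0 = 0" "\<psi> L = 0"
  using test_supp[OF assms] by force+

lemma test_FTC:
  assumes "test_fun L \<psi>" "0 \<le> x"
  shows "integral {0..x} (deriv \<psi>) = \<psi> x"
proof -
  have "(deriv \<psi> has_integral \<psi> x - \<psi> 0) {0..x}"
    using assms(2)
    by (intro fundamental_theorem_of_calculus)
       (auto simp: has_real_derivative_iff_has_vector_derivative[symmetric]
             intro: has_field_derivative_at_within smooth_DERIV test_smooth[OF assms(1)])
  then show ?thesis using test_zero_ends[OF assms(1)] by (simp add: integral_unique)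
qed

lemma fub_core:
  fixes A B :: "real \<Rightarrow> real"
  assumes A: "integrable lborel A" and B: "integrable lborel B"
  shows "(\<integral>x. A x * (\<integral>y. (if y < x then B y else 0) \<partial>lborel) \<partial>lborel)
       = (\<integral>y. B y * (\<integral>x. (if y < x then A x else 0) \<partial>lborel) \<partial>lborel)"
proof -
  have [measurable]: "A \<in> borel_measurable lborel" "B \<in> borel_measurable lborel"
    using A B by auto
  define f where "f = (\<lambda>x y. if y < x then A x * B y else (0::real))"
  have fm[measurable]: "(\<lambda>(x, y). f x y) \<in> borel_measurable (lborel \<Otimes>\<^sub>M lborel)"
    unfolding f_def by measurable
  have iy: "integrable lborel (\<lambda>y. f x y)" for x
  proof (rule Bochner_Integration.integrable_bound[of _ "\<lambda>y. \<bar>A x\<bar> * \<bar>B y\<bar>"])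
    show "integrable lborel (\<lambda>y. \<bar>A x\<bar> * \<bar>B y\<bar>)" using B by auto
    show "(\<lambda>y. f x y) \<in> borel_measurable lborel" unfolding f_def by measurable
    show "AE y in lborel. norm (f x y) \<le> norm (\<bar>A x\<bar> * \<bar>B y\<bar>)"
      by (auto simp: f_def abs_mult)
  qed
  have ix: "integrable lborel (\<lambda>x. f x y)" for y
  proof (rule Bochner_Integration.integrable_bound[of _ "\<lambda>x. \<bar>B y\<bar> * \<bar>A x\<bar>"])
    show "integrable lborel (\<lambda>x. \<bar>B y\<bar> * \<bar>A x\<bar>)" using A by auto
    show "(\<lambda>x. f x y) \<in> borel_measurable lborel" unfolding f_def by measurable
    show "AE x in lborel. norm (f x y) \<le> norm (\<bar>B y\<bar> * \<bar>A x\<bar>)"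
      by (auto simp: f_def abs_mult)
  qed
  have int: "integrable (lborel \<Otimes>\<^sub>M lborel) (\<lambda>(x, y). f x y)"
  proof (rule lborel_pair.Fubini_integrable)
    show "(\<lambda>(x, y). f x y) \<in> borel_measurable (lborel \<Otimes>\<^sub>M lborel)" by (rule fm)
    show "AE x in lborel. integrable lborel (\<lambda>y. case (x, y) of (x, y) \<Rightarrow> f x y)"
      using iy by simp
    show "integrable lborel (\<lambda>x. LINT y|lborel. norm (case (x, y) of (x, y) \<Rightarrow> f x y))"
    proof (rule Bochner_Integration.integrable_bound[of _ "\<lambda>x. \<bar>A x\<bar> * (\<integral>y. \<bar>B y\<bar> \<partial>lborel)"])
      show "integrable lborel (\<lambda>x. \<bar>A x\<bar> * (\<integral>y. \<bar>B y\<bar> \<partial>lborel))" using A by auto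
      show "(\<lambda>x. LINT y|lborel. norm (case (x, y) of (x, y) \<Rightarrow> f x y)) \<in> borel_measurable lborel"
        by measurable
      show "AE x in lborel. norm (LINT y|lborel. norm (case (x, y) of (x, y) \<Rightarrow> f x y))
              \<le> norm (\<bar>A x\<bar> * (\<integral>y. \<bar>B y\<bar> \<partial>lborel))"
      proof (rule AE_I2)
        fix x
        have "(LINT y|lborel. norm (f x y)) \<le> (LINT y|lborel. \<bar>A x\<bar> * \<bar>B y\<bar>)"
          by (rule integral_mono) (use iy B in \<open>auto simp: f_def abs_mult\<close>)
        also have "\<dots> = \<bar>A x\<bar> * (\<integral>y. \<bar>B y\<bar> \<partial>lborel)" by simp
        finally have "(LINT y|lborel. norm (f x y)) \<le> \<bar>A x\<bar> * (\<integral>y. \<bar>B y\<bar> \<partial>lborel)" .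
        moreover have "0 \<le> (LINT y|lborel. norm (f x y))" by simp
        moreover have "0 \<le> (\<integral>y. \<bar>B y\<bar> \<partial>lborel)" by simp
        ultimately show "norm (LINT y|lborel. norm (case (x, y) of (x, y) \<Rightarrow> f x y))
              \<le> norm (\<bar>A x\<bar> * (\<integral>y. \<bar>B y\<bar> \<partial>lborel))" by simp
      qed
    qed
  qed
  have "(\<integral>y. (\<integral>x. f x y \<partial>lborel) \<partial>lborel) = (\<integral>x. (\<integral>y. f x y \<partial>lborel) \<partial>lborel)"
    by (rule lborel_pair.Fubini_integral[OF int])
  moreover have "(\<integral>x. f x y \<partial>lborel) = B y * (\<integral>x. (if y < x then A x else 0) \<partial>lborel)" for y
  proof -
    have "(\<integral>x. f x y \<partial>lborel) = (\<integral>x. B y * (if y < x then A x else 0) \<partial>lborel)"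
      by (rule Bochner_Integration.integral_cong) (auto simp: f_def)
    then show ?thesis by simp
  qed
  moreover have "(\<integral>y. f x y \<partial>lborel) = A x * (\<integral>y. (if y < x then B y else 0) \<partial>lborel)" for x
  proof -
    have "(\<integral>y. f x y \<partial>lborel) = (\<integral>y. A x * (if y < x then B y else 0) \<partial>lborel)"
      by (rule Bochner_Integration.integral_cong) (auto simp: f_def)
    then show ?thesis by simp
  qed
  ultimately show ?thesis by simp
qed

lemma integrable_mult_bounded:
  fixes B G :: "real \<Rightarrow> real"
  assumes "integrable M B" "G \<in> borel_measurable M" "\<And>y. \<bar>G y\<bar> \<le> C"
  shows "integrable M (\<lambda>y. B y * G y)"
proof (rule Bochner_Integration.integrable_bound[of _ "\<lambda>y. \<bar>B y\<bar> * C"])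
  show "integrable M (\<lambda>y. \<bar>B y\<bar> * C)" using assms(1) by auto
  show "(\<lambda>y. B y * G y) \<in> borel_measurable M" using assms(1,2) by auto
  show "AE y in M. norm (B y * G y) \<le> norm (\<bar>B y\<bar> * C)"
  proof (rule AE_I2)
    fix y
    have "\<bar>B y\<bar> * \<bar>G y\<bar> \<le> \<bar>B y\<bar> * C" using assms(3) by (simp add: mult_left_mono)
    moreover have "0 \<le> C" using assms(3)[of y] by simp
    ultimately show "norm (B y * G y) \<le> norm (\<bar>B y\<bar> * C)" by (simp add: abs_mult)
  qed
qed

lemma bound_if_integral:
  fixes A :: "real \<Rightarrow> real"
  assumes "integrable lborel A" and [measurable]: "Measurable.pred lborel P"
  shows "\<bar>\<integral>x. (if P x then A x else 0) \<partial>lborel\<bar> \<le> (\<integral>x. \<bar>A x\<bar> \<partial>lborel)"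
proof -
  have [measurable]: "A \<in> borel_measurable lborel" using assms by auto
  have "\<bar>\<integral>x. (if P x then A x else 0) \<partial>lborel\<bar> \<le> (\<integral>x. \<bar>if P x then A x else 0\<bar> \<partial>lborel)"
    by (rule integral_abs_bound)
  also have "\<dots> \<le> (\<integral>x. \<bar>A x\<bar> \<partial>lborel)"
  proof (rule integral_mono)
    show "integrable lborel (\<lambda>x. \<bar>A x\<bar>)" using assms by auto
    show "integrable lborel (\<lambda>x. \<bar>if P x then A x else 0\<bar>)"
      by (rule Bochner_Integration.integrable_bound[of _ "\<lambda>x. \<bar>A x\<bar>"]) (use assms in \<open>auto\<close>)
  qed auto
  finally show ?thesis .
qed

definition prim :: "(real \<Rightarrow> real) \<Rightarrow> real \<Rightarrow> real" where
  "prim a x = (LINT y:{0..x}|lborel. a y)"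

lemma prim_if:
  assumes "0 \<le> x" "x \<le> L"
  shows "prim a x = (\<integral>y. (if y \<le> x then indicator {0..L} y * a y else 0) \<partial>lborel)"
  unfolding prim_def set_lebesgue_integral_def
  by (rule Bochner_Integration.integral_cong) (use assms in \<open>auto simp: indicator_def\<close>)

lemma prim_L: "prim a L = integral\<^sup>L (NL L) a"
  unfolding prim_def LINT_NL ..

lemma integral_if_le_lt:
  fixes A :: "real \<Rightarrow> real"
  assumes [measurable]: "A \<in> borel_measurable lborel"
  shows "(\<integral>y. (if y \<le> x then A y else 0) \<partial>lborel) = (\<integral>y. (if y < x then A y else 0) \<partial>lborel)"
proof (rule integral_cong_AE)
  show "AE y in lborel. (if y \<le> x then A y else 0) = (if y < x then A y else 0)"
    using AE_lborel_singleton[of x] by eventually_elim auto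
qed measurable

lemma NL_lborel:
  fixes f :: "real \<Rightarrow> real"
  shows "integral\<^sup>L (NL L) f = (\<integral>x. indicator {0..L} x * f x \<partial>lborel)"
  using LINT_NL[of L f] unfolding set_lebesgue_integral_def by simp

lemma NL_integrable_lborel:
  fixes f :: "real \<Rightarrow> real"
  shows "integrable (NL L) f \<longleftrightarrow> integrable lborel (\<lambda>x. indicator {0..L} x * f x)"
  using seti_NL[of L f] unfolding set_integrable_def by simp

lemma FI:
  fixes a b :: "real \<Rightarrow> real"
  assumes L: "0 \<le> L" and ia: "integrable (NL L) a" and ib: "integrable (NL L) b"
  shows "integral\<^sup>L (NL L) (\<lambda>x. prim a x * b x) + integral\<^sup>L (NL L) (\<lambda>x. a x * prim b x)
         = prim a L * prim b L"
proof -
  define A where "A = (\<lambda>y. indicator {0..L} y * a y)"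
  define B where "B = (\<lambda>y. indicator {0..L} y * b y)"
  have iA: "integrable lborel A" and iB: "integrable lborel B"
    using ia ib unfolding A_def B_def NL_integrable_lborel .
  have [measurable]: "A \<in> borel_measurable lborel" "B \<in> borel_measurable lborel"
    using iA iB by auto
  define Ga where "Ga = (\<lambda>y. \<integral>x. (if x \<le> y then A x else 0) \<partial>lborel)"
  define Ha where "Ha = (\<lambda>y. \<integral>x. (if y < x then A x else 0) \<partial>lborel)"
  define Gb where "Gb = (\<lambda>y. \<integral>x. (if x < y then B x else 0) \<partial>lborel)"
  have [measurable]: "Ga \<in> borel_measurable lborel" "Ha \<in> borel_measurable lborel"
      "Gb \<in> borel_measurable lborel"
    unfolding Ga_def Ha_def Gb_def by measurable
  have bGa: "\<bar>Ga y\<bar> \<le> (\<integral>x. \<bar>A x\<bar> \<partial>lborel)" for y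
    unfolding Ga_def by (rule bound_if_integral[OF iA]) measurable
  have bHa: "\<bar>Ha y\<bar> \<le> (\<integral>x. \<bar>A x\<bar> \<partial>lborel)" for y
    unfolding Ha_def by (rule bound_if_integral[OF iA]) measurable
  have bGb: "\<bar>Gb y\<bar> \<le> (\<integral>x. \<bar>B x\<bar> \<partial>lborel)" for y
    unfolding Gb_def by (rule bound_if_integral[OF iB]) measurable
  have T1: "integral\<^sup>L (NL L) (\<lambda>x. prim a x * b x) = (\<integral>x. B x * Ga x \<partial>lborel)"
    unfolding NL_lborel
  proof (rule Bochner_Integration.integral_cong[OF refl])
    fix x
    show "indicator {0..L} x * (prim a x * b x) = B x * Ga x"
    proof (cases "x \<in> {0..L}")
      case True
      then have "prim a x = Ga x" unfolding Ga_def A_def by (subst prim_if[of x L]) auto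
      then show ?thesis unfolding B_def by simp
    qed (simp add: B_def)
  qed
  have T2: "integral\<^sup>L (NL L) (\<lambda>x. a x * prim b x) = (\<integral>x. A x * Gb x \<partial>lborel)"
    unfolding NL_lborel
  proof (rule Bochner_Integration.integral_cong[OF refl])
    fix x
    show "indicator {0..L} x * (a x * prim b x) = A x * Gb x"
    proof (cases "x \<in> {0..L}")
      case True
      then have "prim b x = (\<integral>y. (if y \<le> x then B y else 0) \<partial>lborel)"
        unfolding B_def by (subst prim_if[of x L]) auto
      also have "\<dots> = Gb x" unfolding Gb_def by (rule integral_if_le_lt) measurable
      finally have "prim b x = Gb x" .
      then show ?thesis unfolding A_def by simp
    qed (simp add: A_def)
  qed
  have "(\<integral>x. A x * Gb x \<partial>lborel) = (\<integral>y. B y * Ha y \<partial>lborel)"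
    unfolding Gb_def Ha_def by (rule fub_core[OF iA iB])
  then have "integral\<^sup>L (NL L) (\<lambda>x. prim a x * b x) + integral\<^sup>L (NL L) (\<lambda>x. a x * prim b x)
      = (\<integral>y. B y * Ga y \<partial>lborel) + (\<integral>y. B y * Ha y \<partial>lborel)"
    using T1 T2 by simp
  also have "\<dots> = (\<integral>y. B y * Ga y + B y * Ha y \<partial>lborel)"
    by (rule Bochner_Integration.integral_add[symmetric])
       (auto intro!: integrable_mult_bounded[OF iB] bGa bHa)
  also have "\<dots> = (\<integral>y. B y * (\<integral>x. A x \<partial>lborel) \<partial>lborel)"
  proof (rule Bochner_Integration.integral_cong[OF refl])
    fix y
    have "Ga y + Ha y = (\<integral>x. (if x \<le> y then A x else 0) + (if y < x then A x else 0) \<partial>lborel)"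
      unfolding Ga_def Ha_def
      by (rule Bochner_Integration.integral_add[symmetric])
         (auto intro!: Bochner_Integration.integrable_bound[OF integrable_abs[OF iA]])
    also have "\<dots> = (\<integral>x. A x \<partial>lborel)"
      by (rule Bochner_Integration.integral_cong) auto
    finally show "B y * Ga y + B y * Ha y = B y * (\<integral>x. A x \<partial>lborel)"
      by (simp add: distrib_left[symmetric])
  qed
  also have "\<dots> = (\<integral>y. B y \<partial>lborel) * (\<integral>x. A x \<partial>lborel)" by simp
  also have "\<dots> = prim a L * prim b L"
    unfolding prim_L NL_lborel A_def B_def by simp
  finally show ?thesis .
qed

lemma dens_eq:
  fixes h :: "real \<Rightarrow> real"
  assumes ih: "integrable lborel h" and nn: "\<And>x. 0 \<le> h x" and A: "A \<in> sets borel"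
  shows "emeasure (density lborel (\<lambda>x. ennreal (h x))) A = ennreal (\<integral>x. h x * indicator A x \<partial>lborel)"
proof -
  have [measurable]: "h \<in> borel_measurable lborel" using ih by auto
  have "emeasure (density lborel (\<lambda>x. ennreal (h x))) A = (\<integral>\<^sup>+ x. ennreal (h x) * indicator A x \<partial>lborel)"
    by (rule emeasure_density) (use A in auto)
  also have "\<dots> = (\<integral>\<^sup>+ x. ennreal (h x * indicator A x) \<partial>lborel)"
    by (rule nn_integral_cong) (simp split: split_indicator)
  also have "\<dots> = ennreal (\<integral>x. h x * indicator A x \<partial>lborel)"
  proof (rule nn_integral_eq_integral)
    show "integrable lborel (\<lambda>x. h x * indicator A x)"
      using integrable_mult_indicator[of A lborel h] A ih by (simp add: mult.commute)
  qed (simp add: nn)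
  finally show ?thesis .
qed

lemma prim_zero_ae:
  fixes k :: "real \<Rightarrow> real"
  assumes L: "0 \<le> L" and ik: "integrable (NL L) k" and z: "\<And>x. x \<in> {0..L} \<Longrightarrow> prim k x = 0"
  shows "AE x in NL L. k x = 0"
proof -
  define g where "g = (\<lambda>x. indicator {0..L} x * k x)"
  have ig: "integrable lborel g" using ik unfolding g_def NL_integrable_lborel .
  have [measurable]: "g \<in> borel_measurable lborel" using ig by auto
  define gp where "gp = (\<lambda>x. max 0 (g x))"
  define gn where "gn = (\<lambda>x. max 0 (- g x))"
  have igp: "integrable lborel gp" unfolding gp_def using ig by auto
  have ign: "integrable lborel gn" unfolding gn_def using ig by auto
  have gpn: "g x = gp x - gn x" for x unfolding gp_def gn_def by auto
  have int_le: "(\<integral>y. g y * indicator {..x} y \<partial>lborel) = 0" for x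
  proof (cases "x < 0")
    case True
    show ?thesis
      by (intro integral_eq_zero_AE AE_I2) (use True in \<open>auto simp: g_def indicator_def\<close>)
  next
    case False
    have "(\<integral>y. g y * indicator {..x} y \<partial>lborel) = prim k (min x L)"
      unfolding prim_def set_lebesgue_integral_def
      by (rule Bochner_Integration.integral_cong) (auto simp: g_def indicator_def)
    also have "\<dots> = 0" using False L by (intro z) auto
    finally show ?thesis .
  qed
  have int_all: "(\<integral>y. g y \<partial>lborel) = 0"
    using z[of L] L unfolding prim_def set_lebesgue_integral_def g_def by simp
  have int_gt: "(\<integral>y. g y * indicator {x<..} y \<partial>lborel) = 0" for x
  proof -
    have "(\<integral>y. g y \<partial>lborel) = (\<integral>y. g y * indicator {..x} y + g y * indicator {x<..} y \<partial>lborel)"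
      by (rule Bochner_Integration.integral_cong) (auto simp: indicator_def)
    also have "\<dots> = (\<integral>y. g y * indicator {..x} y \<partial>lborel) + (\<integral>y. g y * indicator {x<..} y \<partial>lborel)"
      by (rule Bochner_Integration.integral_add)
         (use integrable_mult_indicator[of _ lborel g] ig in \<open>auto simp: mult.commute\<close>)
    finally show ?thesis using int_le[of x] int_all by simp
  qed
  have sets1: "sets (density lborel (\<lambda>x. ennreal (gp x))) = sets borel" by simp
  have sets2: "sets (density lborel (\<lambda>x. ennreal (gn x))) = sets borel" by simp
  have split_int: "(\<integral>x. gp x * indicator A x \<partial>lborel) - (\<integral>x. gn x * indicator A x \<partial>lborel)
        = (\<integral>x. g x * indicator A x \<partial>lborel)" if "A \<in> sets borel" for A
  proof -
    have "(\<integral>x. gp x * indicator A x \<partial>lborel) - (\<integral>x. gn x * indicator A x \<partial>lborel)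
        = (\<integral>x. gp x * indicator A x - gn x * indicator A x \<partial>lborel)"
      by (rule Bochner_Integration.integral_diff[symmetric])
         (use integrable_mult_indicator[of A lborel gp] integrable_mult_indicator[of A lborel gn]
            that igp ign in \<open>auto simp: mult.commute\<close>)
    also have "\<dots> = (\<integral>x. g x * indicator A x \<partial>lborel)"
      by (rule Bochner_Integration.integral_cong) (auto simp: gpn left_diff_distrib)
    finally show ?thesis .
  qed
  have nnA: "0 \<le> (\<integral>x. gp x * indicator A x \<partial>lborel)" "0 \<le> (\<integral>x. gn x * indicator A x \<partial>lborel)" for A
    by (auto intro!: integral_nonneg_AE simp: gp_def gn_def)
  have Meq: "density lborel (\<lambda>x. ennreal (gp x)) = density lborel (\<lambda>x. ennreal (gn x))"
  proof (rule measure_eqI_lessThan[OF sets1 sets2])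
    fix x
    show "emeasure (density lborel (\<lambda>x. ennreal (gp x))) {x<..} < \<infinity>"
      by (subst dens_eq[OF igp]) (auto simp: gp_def)
    have "(\<integral>y. gp y * indicator {x<..} y \<partial>lborel) = (\<integral>y. gn y * indicator {x<..} y \<partial>lborel)"
      using split_int[of "{x<..}"] int_gt[of x] by simp
    then show "emeasure (density lborel (\<lambda>x. ennreal (gp x))) {x<..} = emeasure (density lborel (\<lambda>x. ennreal (gn x))) {x<..}"
      by (subst dens_eq[OF igp], simp add: gp_def, simp, subst dens_eq[OF ign]) (auto simp: gn_def)
  qed
  have allA: "set_lebesgue_integral lborel A g = set_lebesgue_integral lborel A (\<lambda>x. 0)" if "A \<in> sets lborel" for A
  proof -
    have A: "A \<in> sets borel" using that by simp
    have "ennreal (\<integral>x. gp x * indicator A x \<partial>lborel) = ennreal (\<integral>x. gn x * indicator A x \<partial>lborel)"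
      using dens_eq[OF igp _ A] dens_eq[OF ign _ A] Meq by (simp add: gp_def gn_def)
    then have "(\<integral>x. gp x * indicator A x \<partial>lborel) = (\<integral>x. gn x * indicator A x \<partial>lborel)"
      using nnA by (simp add: ennreal_inj)
    then have "(\<integral>x. g x * indicator A x \<partial>lborel) = 0" using split_int[OF A] by simp
    then show ?thesis unfolding set_lebesgue_integral_def by (simp add: mult.commute)
  qed
  have "AE x in lborel. g x = 0"
    using density_unique_real[OF ig _ allA] by simp
  then have "AE x in lborel. x \<in> {0..L} \<longrightarrow> k x = 0"
    by eventually_elim (auto simp: g_def)
  then show ?thesis unfolding NL_def by (subst AE_restrict_space_iff) auto
qed

lemma NL_HK: fixes f :: "real \<Rightarrow> real"
  assumes "continuous_on {0..L} f" shows "integral\<^sup>L (NL L) f = integral {0..L} f"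
  using LINT_NL[of L f] set_borel_integral_eq_integral(2)[OF borel_integrable_atLeastAtMost'[OF assms]]
  by simp

lemma cont_int_NL: fixes f :: "real \<Rightarrow> real"
  assumes "continuous_on {0..L} f" shows "integrable (NL L) f"
  using seti_NL borel_integrable_atLeastAtMost'[OF assms] by blast

lemma cont_bdd: fixes f :: "real \<Rightarrow> real"
  assumes "continuous_on {0..L} f" shows "\<exists>C. \<forall>x\<in>{0..L}. \<bar>f x\<bar> \<le> C"
proof -
  have "compact (f ` {0..L})" by (rule compact_continuous_image[OF assms compact_Icc])
  then have "bounded (f ` {0..L})" by (rule compact_imp_bounded)
  then obtain C where "\<forall>y\<in>f ` {0..L}. norm y \<le> C" unfolding bounded_iff by blast
  then show ?thesis by auto
qed

lemma integrable_mult_bnd: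
  fixes B G :: "real \<Rightarrow> real"
  assumes "integrable (NL L) B" "G \<in> borel_measurable (NL L)" "\<And>y. y \<in> {0..L} \<Longrightarrow> \<bar>G y\<bar> \<le> C"
  shows "integrable (NL L) (\<lambda>y. B y * G y)"
proof (rule Bochner_Integration.integrable_bound[of _ "\<lambda>y. \<bar>B y\<bar> * C"])
  show "integrable (NL L) (\<lambda>y. \<bar>B y\<bar> * C)" using assms(1) by auto
  show "(\<lambda>y. B y * G y) \<in> borel_measurable (NL L)" using assms(1,2) by auto
  show "AE y in NL L. norm (B y * G y) \<le> norm (\<bar>B y\<bar> * C)"
    using AE_space
  proof eventually_elim
    case (elim y)
    then have "\<bar>B y\<bar> * \<bar>G y\<bar> \<le> \<bar>B y\<bar> * C" using assms(3) by (simp add: mult_left_mono)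
    moreover have "0 \<le> C" using assms(3)[of y] elim by simp
    ultimately show "norm (B y * G y) \<le> norm (\<bar>B y\<bar> * C)" by (simp add: abs_mult)
  qed
qed

lemma integrable_mult_cont:
  fixes B G :: "real \<Rightarrow> real"
  assumes "integrable (NL L) B" "continuous_on {0..L} G"
  shows "integrable (NL L) (\<lambda>y. B y * G y)"
proof -
  obtain C where "\<forall>x\<in>{0..L}. \<bar>G x\<bar> \<le> C" using cont_bdd[OF assms(2)] by blast
  then show ?thesis using integrable_mult_bnd[OF assms(1) cont_meas_NL[OF assms(2)]] by blast
qed

lemma prim_NL_ind:
  assumes "x \<in> {0..L}"
  shows "prim a x = integral\<^sup>L (NL L) (\<lambda>y. indicator {0..x} y * a y)"
  unfolding prim_def NL_lborel set_lebesgue_integral_def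
  by (rule Bochner_Integration.integral_cong) (use assms in \<open>auto simp: indicator_def\<close>)

lemma prim_HK:
  assumes "integrable (NL L) a" "x \<in> {0..L}"
  shows "prim a x = integral {0..x} a"
proof -
  have "set_integrable lborel {0..L} a" using assms(1) seti_NL by blast
  then have "set_integrable lborel {0..x} a" by (rule set_integrable_subset) (use assms in auto)
  then show ?thesis unfolding prim_def by (rule set_borel_integral_eq_integral(2))
qed

lemma prim_cont:
  assumes "integrable (NL L) a"
  shows "continuous_on {0..L} (prim a)"
proof -
  have "set_integrable lborel {0..L} a" using assms seti_NL by blast
  then have "a integrable_on {0..L}" by (rule set_borel_integral_eq_integral(1))
  then have "continuous_on {0..L} (\<lambda>x. integral {0..x} a)" by (rule indefinite_integral_continuous_1)
  then show ?thesis by (rule continuous_on_eq) (use prim_HK[OF assms] in auto)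
qed

lemma prim_meas: "integrable (NL L) a \<Longrightarrow> prim a \<in> borel_measurable (NL L)"
  by (rule cont_meas_NL[OF prim_cont])

lemma prim_bound:
  assumes "integrable (NL L) a" "x \<in> {0..L}"
  shows "\<bar>prim a x\<bar> \<le> integral\<^sup>L (NL L) (\<lambda>y. \<bar>a y\<bar>)"
proof -
  have "\<bar>prim a x\<bar> \<le> integral\<^sup>L (NL L) (\<lambda>y. \<bar>indicator {0..x} y * a y\<bar>)"
    unfolding prim_NL_ind[OF assms(2)] by (rule integral_abs_bound)
  also have "\<dots> \<le> integral\<^sup>L (NL L) (\<lambda>y. \<bar>a y\<bar>)"
  proof (rule integral_mono)
    show "integrable (NL L) (\<lambda>y. \<bar>a y\<bar>)" using assms by auto
    have "{0..x} \<in> sets (NL L)" unfolding NL_def using assms(2) by (subst sets_restrict_space_iff) auto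
    then show "integrable (NL L) (\<lambda>y. \<bar>indicator {0..x} y * a y\<bar>)"
      using integrable_mult_indicator[of "{0..x}" "NL L" a] assms by auto
  qed (auto simp: indicator_def)
  finally show ?thesis .
qed

lemma prim_0: "prim a 0 = 0"
  unfolding prim_def set_lebesgue_integral_def
  by (rule integral_eq_zero_AE) (use AE_lborel_singleton[of 0] in \<open>eventually_elim, auto\<close>)

lemma test_int: "test_fun L \<eta> \<Longrightarrow> integrable (NL L) \<eta>"
  using cont_int_NL test_cont by blast

lemma test_supp_strict:
  assumes "test_fun L \<psi>"
  shows "\<exists>a b. 0 < a \<and> a < b \<and> b < L \<and> (\<forall>x. (x \<le> a \<or> b \<le> x) \<longrightarrow> \<psi> x = 0)"
proof -
  obtain a b where ab: "0 < a" "a < b" "b < L" "\<forall>x. x \<notin> {a..b} \<longrightarrow> \<psi> x = 0"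
    using test_supp[OF assms] by blast
  show ?thesis
    using ab by (intro exI[of _ "a/2"] exI[of _ "(b+L)/2"]) auto
qed

lemma prim_deriv_test:
  assumes "test_fun L \<eta>" "x \<in> {0..L}"
  shows "prim (deriv \<eta>) x = \<eta> x"
  using prim_HK[OF cont_int_NL[OF test_deriv_cont[OF assms(1)]] assms(2)] test_FTC[OF assms(1)] assms(2)
  by simp

lemma antideriv:
  assumes L: "0 < L" and z: "test_fun L \<zeta>" and m: "integral\<^sup>L (NL L) \<zeta> = 0"
  shows "test_fun L (\<lambda>x. integral {0..x} \<zeta>)"
    and "\<And>x. ((\<lambda>x. integral {0..x} \<zeta>) has_real_derivative \<zeta> x) (at x)"
proof -
  define Z where "Z = (\<lambda>x. integral {0..x} \<zeta>)"
  obtain a b where ab: "0 < a" "a < b" "b < L" "\<forall>x. (x \<le> a \<or> b \<le> x) \<longrightarrow> \<zeta> x = 0"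
    using test_supp_strict[OF z] by blast
  have cz: "continuous_on S \<zeta>" for S using test_cont[OF z] .
  have izo: "\<zeta> integrable_on {c..d}" for c d by (rule integrable_continuous_interval[OF cz])
  have Zlow: "Z x = 0" if "x \<le> a" for x
  proof -
    have "Z x = integral {0..x} (\<lambda>_. 0)"
      unfolding Z_def by (rule Henstock_Kurzweil_Integration.integral_cong) (use ab that in auto)
    then show ?thesis by simp
  qed
  have zb: "integral {b..y} \<zeta> = 0" for y
  proof -
    have "integral {b..y} \<zeta> = integral {b..y} (\<lambda>_. 0)"
      by (rule Henstock_Kurzweil_Integration.integral_cong) (use ab in auto)
    then show ?thesis by simp
  qed
  have z0b: "integral {0..b} \<zeta> = 0"
  proof -
    have "integral {0..L} \<zeta> = 0" using m NL_HK[OF cz] by simp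
    moreover have "integral {0..b} \<zeta> + integral {b..L} \<zeta> = integral {0..L} \<zeta>"
      by (rule Henstock_Kurzweil_Integration.integral_combine) (use ab izo in auto)
    ultimately show ?thesis using zb by simp
  qed
  have Zhigh: "Z x = 0" if "b \<le> x" for x
  proof -
    have "integral {0..b} \<zeta> + integral {b..x} \<zeta> = integral {0..x} \<zeta>"
      by (rule Henstock_Kurzweil_Integration.integral_combine) (use ab that izo in auto)
    then show ?thesis unfolding Z_def using z0b zb by simp
  qed
  have D: "(Z has_real_derivative \<zeta> x) (at x)" for x
  proof (cases "x > 0")
    case True
    have "(Z has_real_derivative \<zeta> x) (at x within {0..x+1})"
      unfolding Z_def by (rule integral_has_real_derivative) (use cz True in auto)
    moreover have "at x within {0..x+1} = at x"
      by (rule at_within_interior) (use True in auto)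
    ultimately show ?thesis by simp
  next
    case False
    have "((\<lambda>_. 0) has_real_derivative 0) (at x)" by simp
    then have "(Z has_real_derivative 0) (at x)"
      by (rule has_field_derivative_transform_within_open[of _ _ _ "{..<a}"])
         (use False ab Zlow in auto)
    moreover have "\<zeta> x = 0" using False ab by auto
    ultimately show ?thesis by simp
  qed
  then show "((\<lambda>x. integral {0..x} \<zeta>) has_real_derivative \<zeta> x) (at x)" for x unfolding Z_def .
  have "smooth Z" by (rule smoothI[OF D test_smooth[OF z]])
  moreover have "\<forall>x. x \<notin> {a..b} \<longrightarrow> Z x = 0" using Zlow Zhigh by auto
  ultimately show "test_fun L (\<lambda>x. integral {0..x} \<zeta>)"
    unfolding test_fun_iff Z_def[symmetric] using ab by blast
qed

lemma exists_psi0: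
  assumes L: "0 < L"
  shows "\<exists>\<psi>0. test_fun L \<psi>0 \<and> integral\<^sup>L (NL L) \<psi>0 = 1"
proof -
  define bb where "bb = bump (L/3) (2*L/3)"
  have tb: "test_fun L bb" unfolding bb_def by (rule test_bump) (use L in auto)
  have cb: "continuous_on {0..L} bb" using test_cont[OF tb] .
  define I where "I = integral\<^sup>L (NL L) bb"
  have I: "I = integral {0..L} bb" unfolding I_def by (rule NL_HK[OF cb])
  have nn: "\<And>x. x \<in> {0..L} \<Longrightarrow> bb x \<ge> 0" unfolding bb_def by (simp add: bump_nonneg)
  have "I \<noteq> 0"
  proof
    assume "I = 0"
    then have "\<forall>x\<in>{0..L}. bb x = 0" using integral_eq_0_iff[OF cb L nn] I by simp
    moreover have "bb (L/2) > 0" unfolding bb_def by (rule bump_pos) (use L in auto)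
    ultimately show False using L by auto
  qed
  moreover have "I \<ge> 0" unfolding I
    by (rule integral_nonneg) (use integrable_continuous_interval[OF cb] nn in auto)
  ultimately have Ipos: "I > 0" by simp
  define \<psi>0 where "\<psi>0 = (\<lambda>x. (1/I) * bb x)"
  have "test_fun L \<psi>0" unfolding \<psi>0_def by (rule test_scale[OF tb])
  moreover have "integral\<^sup>L (NL L) \<psi>0 = 1" unfolding \<psi>0_def using Ipos by (simp add: I_def)
  ultimately show ?thesis by blast
qed

lemma orth_mean:
  fixes F :: "real \<Rightarrow> real"
  assumes L: "0 < L" and iF: "integrable (NL L) F"
    and h: "\<And>\<zeta>. test_fun L \<zeta> \<Longrightarrow> integral\<^sup>L (NL L) \<zeta> = 0 \<Longrightarrow> integral\<^sup>L (NL L) (\<lambda>x. F x * \<zeta> x) = 0"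
  shows "\<exists>c. \<forall>\<eta>. test_fun L \<eta> \<longrightarrow> integral\<^sup>L (NL L) (\<lambda>x. (F x - c) * \<eta> x) = 0"
proof -
  obtain \<psi>0 where p0: "test_fun L \<psi>0" "integral\<^sup>L (NL L) \<psi>0 = 1" using exists_psi0[OF L] by blast
  define c where "c = integral\<^sup>L (NL L) (\<lambda>x. F x * \<psi>0 x)"
  have "integral\<^sup>L (NL L) (\<lambda>x. (F x - c) * \<eta> x) = 0" if t: "test_fun L \<eta>" for \<eta>
  proof -
    define m where "m = integral\<^sup>L (NL L) \<eta>"
    define \<zeta> where "\<zeta> = (\<lambda>x. \<eta> x - m * \<psi>0 x)"
    have tz: "test_fun L \<zeta>" unfolding \<zeta>_def by (rule test_diff[OF t test_scale[OF p0(1)]])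
    have ie: "integrable (NL L) \<eta>" "integrable (NL L) \<psi>0" using test_int t p0 by auto
    have "integral\<^sup>L (NL L) \<zeta> = m - m * 1" unfolding \<zeta>_def m_def using ie p0(2) by simp
    then have "integral\<^sup>L (NL L) (\<lambda>x. F x * \<zeta> x) = 0" using h[OF tz] by simp
    moreover have iFe: "integrable (NL L) (\<lambda>x. F x * \<eta> x)"
      by (rule integrable_mult_cont[OF iF test_cont[OF t]])
    moreover have iFp: "integrable (NL L) (\<lambda>x. F x * \<psi>0 x)"
      by (rule integrable_mult_cont[OF iF test_cont[OF p0(1)]])
    moreover have "integral\<^sup>L (NL L) (\<lambda>x. F x * \<zeta> x) = integral\<^sup>L (NL L) (\<lambda>x. F x * \<eta> x) - m * c"
      unfolding \<zeta>_def c_def using iFe iFp by (simp add: right_diff_distrib mult.left_commute)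
    ultimately have e1: "integral\<^sup>L (NL L) (\<lambda>x. F x * \<eta> x) = m * c" by simp
    have "integral\<^sup>L (NL L) (\<lambda>x. (F x - c) * \<eta> x) = integral\<^sup>L (NL L) (\<lambda>x. F x * \<eta> x) - c * m"
      unfolding m_def using iFe ie by (simp add: left_diff_distrib)
    then show ?thesis using e1 by simp
  qed
  then show ?thesis by blast
qed

lemma pos_cont1:
  fixes K :: "real \<Rightarrow> real"
  assumes L: "0 < L" and cK: "continuous_on {0..L} K" and x0: "x0 \<in> {0<..<L}" and pos: "K x0 > 0"
  shows "\<exists>\<eta>. test_fun L \<eta> \<and> integral\<^sup>L (NL L) (\<lambda>x. K x * \<eta> x) > 0"
proof -
  have x0': "x0 \<in> {0..L}" using x0 by auto
  obtain \<delta> where d: "\<delta> > 0" "\<forall>y\<in>{0..L}. dist y x0 < \<delta> \<longrightarrow> dist (K y) (K x0) < K x0 / 2"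
    using cK x0' pos unfolding continuous_on_iff by (meson half_gt_zero)
  define a where "a = max (x0 - \<delta>/2) (x0/2)"
  define b where "b = min (x0 + \<delta>/2) ((x0+L)/2)"
  have ab: "0 < a" "a < x0" "x0 < b" "b < L" using x0 d(1) unfolding a_def b_def
    by (auto simp: min_less_iff_disj less_max_iff_disj max_less_iff_conj)
  have Kp: "K y > 0" if "a < y" "y < b" for y
  proof -
    have "y \<in> {0..L}" using that ab by auto
    moreover have "dist y x0 < \<delta>" using that unfolding a_def b_def dist_real_def by auto
    ultimately have "dist (K y) (K x0) < K x0 / 2" using d(2) by blast
    then have "\<bar>K y - K x0\<bar> < K x0 / 2" by (simp add: dist_real_def)
    moreover have "K x0 - K y \<le> \<bar>K y - K x0\<bar>" by linarith
    ultimately show ?thesis using pos by linarith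
  qed
  have tb: "test_fun L (bump a b)" by (rule test_bump) (use ab in auto)
  define f where "f = (\<lambda>x. K x * bump a b x)"
  have cf: "continuous_on {0..L} f" unfolding f_def
    by (intro continuous_intros cK test_cont[OF tb])
  have nn: "f x \<ge> 0" if "x \<in> {0..L}" for x
  proof (cases "a < x \<and> x < b")
    case True then show ?thesis unfolding f_def using Kp[of x] bump_nonneg[of a b x] by simp
  next
    case False then have "bump a b x = 0" by (intro bump_out) auto
    then show ?thesis unfolding f_def by simp
  qed
  have fx0: "f x0 > 0" unfolding f_def using Kp[of x0] bump_pos[of a x0 b] ab by simp
  have "integral {0..L} f \<noteq> 0"
  proof
    assume "integral {0..L} f = 0"
    then have "\<forall>x\<in>{0..L}. f x = 0" using integral_eq_0_iff[OF cf L nn] by simp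
    then show False using fx0 x0' by auto
  qed
  moreover have "integral {0..L} f \<ge> 0"
    by (rule integral_nonneg) (use integrable_continuous_interval[OF cf] nn in auto)
  ultimately have "integral\<^sup>L (NL L) f > 0" using NL_HK[OF cf] by simp
  then show ?thesis using tb unfolding f_def by blast
qed

lemma pos_cont:
  fixes K :: "real \<Rightarrow> real"
  assumes L: "0 < L" and cK: "continuous_on {0..L} K"
    and h: "\<And>\<eta>. test_fun L \<eta> \<Longrightarrow> integral\<^sup>L (NL L) (\<lambda>x. K x * \<eta> x) = 0"
  shows "\<And>x. x \<in> {0..L} \<Longrightarrow> K x = 0"
proof -
  have inner: "K x = 0" if xin: "x \<in> {0<..<L}" for x
  proof (rule ccontr)
    assume ne: "K x \<noteq> 0"
    show False
    proof (cases "K x > 0")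
      case True
      then show False using pos_cont1[OF L cK xin] h by force
    next
      case False
      then have "(\<lambda>x. - K x) x > 0" using ne by simp
      moreover have "continuous_on {0..L} (\<lambda>x. - K x)" by (intro continuous_intros cK)
      ultimately obtain \<eta> where "test_fun L \<eta>" "integral\<^sup>L (NL L) (\<lambda>x. - K x * \<eta> x) > 0"
        using pos_cont1[OF L _ xin] by blast
      then show False using h by simp
    qed
  qed
  fix x assume "x \<in> {0..L}"
  then have "x \<in> closure {0<..<L}" using L by simp
  moreover have "continuous_on (closure {0<..<L}) K" using cK L by simp
  ultimately show "K x = 0" using continuous_constant_on_closure inner by blast
qed

lemma deriv_antideriv:
  assumes "0 < L" "test_fun L \<zeta>" "integral\<^sup>L (NL L) \<zeta> = 0"
  shows "deriv (\<lambda>x. integral {0..x} \<zeta>) = \<zeta>"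
  by (intro ext DERIV_imp_deriv antideriv(2)[OF assms])

lemma DBR:
  fixes h :: "real \<Rightarrow> real"
  assumes L: "0 < L" and ih: "integrable (NL L) h"
    and hz: "\<And>\<psi>. test_fun L \<psi> \<Longrightarrow> integral\<^sup>L (NL L) (\<lambda>x. h x * deriv \<psi> x) = 0"
  shows "\<exists>c. AE x in NL L. h x = c"
proof -
  have s1: "integral\<^sup>L (NL L) (\<lambda>x. h x * \<zeta> x) = 0"
    if "test_fun L \<zeta>" "integral\<^sup>L (NL L) \<zeta> = 0" for \<zeta>
    using hz[OF antideriv(1)[OF L that]] deriv_antideriv[OF L that] by simp
  obtain c where c: "\<And>\<eta>. test_fun L \<eta> \<Longrightarrow> integral\<^sup>L (NL L) (\<lambda>x. (h x - c) * \<eta> x) = 0"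
    using orth_mean[OF L ih s1] by blast
  define k where "k = (\<lambda>x. h x - c)"
  have ik: "integrable (NL L) k" unfolding k_def using ih by auto
  have s3: "integral\<^sup>L (NL L) (\<lambda>x. prim k x * deriv \<eta> x) = 0" if t: "test_fun L \<eta>" for \<eta>
  proof -
    have ide: "integrable (NL L) (deriv \<eta>)" by (rule cont_int_NL[OF test_deriv_cont[OF t]])
    have fi: "integral\<^sup>L (NL L) (\<lambda>x. prim k x * deriv \<eta> x) + integral\<^sup>L (NL L) (\<lambda>x. k x * prim (deriv \<eta>) x)
        = prim k L * prim (deriv \<eta>) L"
      by (rule FI) (use L ik ide in auto)
    have "prim (deriv \<eta>) L = 0" using prim_deriv_test[OF t, of L] test_zero_ends[OF t] L by simp
    moreover have "integral\<^sup>L (NL L) (\<lambda>x. k x * prim (deriv \<eta>) x) = integral\<^sup>L (NL L) (\<lambda>x. k x * \<eta> x)"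
      by (rule Bochner_Integration.integral_cong) (auto simp: prim_deriv_test[OF t])
    moreover have "integral\<^sup>L (NL L) (\<lambda>x. k x * \<eta> x) = 0" unfolding k_def by (rule c[OF t])
    ultimately show ?thesis using fi by simp
  qed
  define K where "K = prim k"
  have cK: "continuous_on {0..L} K" unfolding K_def by (rule prim_cont[OF ik])
  have s4: "integral\<^sup>L (NL L) (\<lambda>x. K x * \<zeta> x) = 0"
    if "test_fun L \<zeta>" "integral\<^sup>L (NL L) \<zeta> = 0" for \<zeta>
    using s3[OF antideriv(1)[OF L that]] deriv_antideriv[OF L that] unfolding K_def by simp
  obtain d where d: "\<And>\<eta>. test_fun L \<eta> \<Longrightarrow> integral\<^sup>L (NL L) (\<lambda>x. (K x - d) * \<eta> x) = 0"
    using orth_mean[OF L cont_int_NL[OF cK] s4] by blast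
  have Kd: "K x - d = 0" if "x \<in> {0..L}" for x
    by (rule pos_cont[OF L _ d that]) (intro continuous_intros cK)
  have "d = 0" using Kd[of 0] L prim_0[of k] unfolding K_def by simp
  then have "prim k x = 0" if "x \<in> {0..L}" for x using Kd[OF that] unfolding K_def by simp
  then have "AE x in NL L. k x = 0" by (intro prim_zero_ae) (use L ik in auto)
  then have "AE x in NL L. h x = c" by eventually_elim (simp add: k_def)
  then show ?thesis by blast
qed

lemma weak_deriv_NL:
  assumes "weak_deriv L u v"
  shows "integrable (NL L) u" "integrable (NL L) v"
    "\<And>\<psi>. test_fun L \<psi> \<Longrightarrow> integral\<^sup>L (NL L) (\<lambda>x. u x * deriv \<psi> x) = - integral\<^sup>L (NL L) (\<lambda>x. v x * \<psi> x)"
  using assms unfolding weak_deriv_def seti_NL LINT_NL by auto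

lemma REP:
  assumes L: "0 < L" and wd: "weak_deriv L u v"
  shows "\<exists>c. AE x in NL L. u x = c + prim v x"
proof -
  note w = weak_deriv_NL[OF wd]
  define h where "h = (\<lambda>x. u x - prim v x)"
  have cV: "continuous_on {0..L} (prim v)" by (rule prim_cont[OF w(2)])
  have ih: "integrable (NL L) h" unfolding h_def using w(1) cont_int_NL[OF cV] by auto
  have "integral\<^sup>L (NL L) (\<lambda>x. h x * deriv \<psi> x) = 0" if t: "test_fun L \<psi>" for \<psi>
  proof -
    have cd: "continuous_on {0..L} (deriv \<psi>)" by (rule test_deriv_cont[OF t])
    have ide: "integrable (NL L) (deriv \<psi>)" by (rule cont_int_NL[OF cd])
    have i1: "integrable (NL L) (\<lambda>x. u x * deriv \<psi> x)" by (rule integrable_mult_cont[OF w(1) cd])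
    have i2: "integrable (NL L) (\<lambda>x. prim v x * deriv \<psi> x)"
      by (rule cont_int_NL) (intro continuous_intros cV cd)
    have fi: "integral\<^sup>L (NL L) (\<lambda>x. prim v x * deriv \<psi> x) + integral\<^sup>L (NL L) (\<lambda>x. v x * prim (deriv \<psi>) x)
        = prim v L * prim (deriv \<psi>) L"
      by (rule FI) (use L w(2) ide in auto)
    have "prim (deriv \<psi>) L = 0" using prim_deriv_test[OF t, of L] test_zero_ends[OF t] L by simp
    moreover have "integral\<^sup>L (NL L) (\<lambda>x. v x * prim (deriv \<psi>) x) = integral\<^sup>L (NL L) (\<lambda>x. v x * \<psi> x)"
      by (rule Bochner_Integration.integral_cong) (auto simp: prim_deriv_test[OF t])
    moreover have "integral\<^sup>L (NL L) (\<lambda>x. h x * deriv \<psi> x)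
        = integral\<^sup>L (NL L) (\<lambda>x. u x * deriv \<psi> x) - integral\<^sup>L (NL L) (\<lambda>x. prim v x * deriv \<psi> x)"
      unfolding h_def using i1 i2 by (simp add: left_diff_distrib)
    ultimately show ?thesis using fi w(3)[OF t] by simp
  qed
  then obtain c where "AE x in NL L. h x = c" using DBR[OF L ih] by blast
  then have "AE x in NL L. u x = c + prim v x" by eventually_elim (auto simp: h_def)
  then show ?thesis by blast
qed

lemma cont_ae_zero:
  fixes \<phi> :: "real \<Rightarrow> real"
  assumes L: "0 < L" and c: "continuous_on {0..L} \<phi>" and ae: "AE x in NL L. \<phi> x = 0"
  shows "\<And>x. x \<in> {0..L} \<Longrightarrow> \<phi> x = 0"
proof (rule pos_cont[OF L c])
  fix \<eta> assume "test_fun L \<eta>"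
  show "integral\<^sup>L (NL L) (\<lambda>x. \<phi> x * \<eta> x) = 0"
    by (rule integral_eq_zero_AE) (use ae in \<open>eventually_elim, simp\<close>)
qed

lemma ip_one: "0 \<le> L \<Longrightarrow> ip L (\<lambda>x. 1) (\<lambda>x. 1) = L"
  unfolding ip_def by (simp add: measure_NL)

lemma int_abs_bound:
  assumes L: "0 \<le> L" and w: "L2 L w"
  shows "\<bar>integral\<^sup>L (NL L) w\<bar> \<le> sqrt L * norm2 L w"
proof -
  have "integral\<^sup>L (NL L) w = ip L w (\<lambda>x. 1)" unfolding ip_def by simp
  moreover have "\<bar>ip L w (\<lambda>x. 1)\<bar> \<le> norm2 L w * norm2 L (\<lambda>x. 1)"
    by (rule ip_CS[OF w L2_const])
  moreover have "norm2 L (\<lambda>x. 1) = sqrt L" by (simp add: norm2_ip ip_one[OF L])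
  ultimately show ?thesis by (simp add: mult.commute)
qed

lemma IBP:
  fixes u u' w w' :: "real \<Rightarrow> real"
  assumes L: "0 < L" and wu: "weak_deriv L u u'" and ww: "weak_deriv L w w'"
    and Lu: "L2 L u" and Lu': "L2 L u'" and Lw: "L2 L w" and Lw': "L2 L w'"
    and cw: "continuous_on {0..L} w" and w0: "w 0 = K" and wL: "w L = K"
  shows "ip L u w' + ip L u' w = K * integral\<^sup>L (NL L) u'"
proof -
  obtain c1 where c1: "AE x in NL L. u x = c1 + prim u' x" using REP[OF L wu] by blast
  obtain c2 where c2: "AE x in NL L. w x = c2 + prim w' x" using REP[OF L ww] by blast
  have iu': "integrable (NL L) u'" and iw': "integrable (NL L) w'"
    using weak_deriv_NL(2)[OF wu] weak_deriv_NL(2)[OF ww] by auto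
  have cU: "continuous_on {0..L} (prim u')" by (rule prim_cont[OF iu'])
  have cW: "continuous_on {0..L} (prim w')" by (rule prim_cont[OF iw'])
  have weq: "w x - (c2 + prim w' x) = 0" if "x \<in> {0..L}" for x
    by (rule cont_ae_zero[OF L _ _ that]) (intro continuous_intros cw cW, use c2 in \<open>eventually_elim, simp\<close>)
  have "c2 = K" using weq[of 0] L w0 prim_0[of w'] by simp
  have WL: "prim w' L = 0" using weq[of L] L wL \<open>c2 = K\<close> by simp
  have [measurable]: "u \<in> borel_measurable (NL L)" "w' \<in> borel_measurable (NL L)"
      "prim u' \<in> borel_measurable (NL L)"
    using L2_meas[OF Lu] L2_meas[OF Lw'] prim_meas[OF iu'] by auto
  have iUw': "integrable (NL L) (\<lambda>x. prim u' x * w' x)"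
    using integrable_mult_cont[OF iw' cU] by (simp add: mult.commute)
  have iu'W: "integrable (NL L) (\<lambda>x. u' x * prim w' x)"
    by (rule integrable_mult_cont[OF iu' cW])
  have "ip L u w' = integral\<^sup>L (NL L) (\<lambda>x. (c1 + prim u' x) * w' x)"
    unfolding ip_def by (rule integral_cong_AE) (measurable, use c1 in \<open>eventually_elim, simp\<close>)
  also have "\<dots> = integral\<^sup>L (NL L) (\<lambda>x. c1 * w' x + prim u' x * w' x)"
    by (simp add: distrib_right)
  also have "\<dots> = c1 * integral\<^sup>L (NL L) w' + integral\<^sup>L (NL L) (\<lambda>x. prim u' x * w' x)"
    using iw' iUw' by simp
  also have "integral\<^sup>L (NL L) w' = 0" using WL prim_L[of w' L] by simp
  finally have e1: "ip L u w' = integral\<^sup>L (NL L) (\<lambda>x. prim u' x * w' x)" by simp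
  have "ip L u' w = integral\<^sup>L (NL L) (\<lambda>x. u' x * (K + prim w' x))"
    unfolding ip_def
    by (rule Bochner_Integration.integral_cong) (use weq \<open>c2 = K\<close> in auto)
  also have "\<dots> = integral\<^sup>L (NL L) (\<lambda>x. K * u' x + u' x * prim w' x)"
    by (simp add: distrib_left mult.commute)
  also have "\<dots> = K * integral\<^sup>L (NL L) u' + integral\<^sup>L (NL L) (\<lambda>x. u' x * prim w' x)"
    using iu' iu'W by simp
  finally have e2: "ip L u' w = K * integral\<^sup>L (NL L) u' + integral\<^sup>L (NL L) (\<lambda>x. u' x * prim w' x)" .
  have "integral\<^sup>L (NL L) (\<lambda>x. prim u' x * w' x) + integral\<^sup>L (NL L) (\<lambda>x. u' x * prim w' x)
      = prim u' L * prim w' L"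
    by (rule FI) (use L iu' iw' in auto)
  then show ?thesis using e1 e2 WL by simp
qed

lemma poincare:
  fixes u v :: "real \<Rightarrow> real"
  assumes L: "0 < L" and wd: "weak_deriv L u v" and Lu: "L2 L u" and Lv: "L2 L v"
    and m: "integral\<^sup>L (NL L) u = 0"
  shows "ip L u u \<le> L^2 * ip L v v"
proof -
  obtain c where c: "AE x in NL L. u x = c + prim v x" using REP[OF L wd] by blast
  have iv: "integrable (NL L) v" using weak_deriv_NL(2)[OF wd] .
  define V where "V = prim v"
  define D where "D = integral\<^sup>L (NL L) (\<lambda>y. \<bar>v y\<bar>)"
  have cV: "continuous_on {0..L} V" unfolding V_def by (rule prim_cont[OF iv])
  have iV: "integrable (NL L) V" by (rule cont_int_NL[OF cV])
  have [measurable]: "u \<in> borel_measurable (NL L)" "V \<in> borel_measurable (NL L)"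
    using L2_meas[OF Lu] cont_meas_NL[OF cV] by auto
  have "integral\<^sup>L (NL L) u = integral\<^sup>L (NL L) (\<lambda>x. c + V x)"
    by (rule integral_cong_AE) (measurable, use c in \<open>eventually_elim, simp add: V_def\<close>)
  also have "\<dots> = L * c + integral\<^sup>L (NL L) V"
    using iV L by (simp add: measure_NL)
  finally have cV0: "L * c + integral\<^sup>L (NL L) V = 0" using m by simp
  have dV: "\<bar>V x - V y\<bar> \<le> D" if "x \<in> {0..L}" "y \<in> {0..L}" for x y
  proof -
    have sx: "{0..x} \<in> sets (NL L)" "{0..y} \<in> sets (NL L)"
      unfolding NL_def using that by (subst sets_restrict_space_iff, auto)+
    have i1: "integrable (NL L) (\<lambda>z. indicator {0..x} z * v z)"
      using integrable_mult_indicator[OF sx(1) iv] by simp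
    have i2: "integrable (NL L) (\<lambda>z. indicator {0..y} z * v z)"
      using integrable_mult_indicator[OF sx(2) iv] by simp
    have "V x - V y = integral\<^sup>L (NL L) (\<lambda>z. (indicator {0..x} z - indicator {0..y} z) * v z)"
      unfolding V_def prim_NL_ind[OF that(1)] prim_NL_ind[OF that(2)]
      using i1 i2 by (simp add: left_diff_distrib)
    also have "\<bar>\<dots>\<bar> \<le> integral\<^sup>L (NL L) (\<lambda>z. \<bar>(indicator {0..x} z - indicator {0..y} z) * v z\<bar>)"
      by (rule integral_abs_bound)
    also have "\<dots> \<le> D" unfolding D_def
    proof (rule integral_mono)
      show "integrable (NL L) (\<lambda>z. \<bar>(indicator {0..x} z - indicator {0..y} z) * v z\<bar>)"
        using i1 i2 by (simp add: left_diff_distrib)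
      show "integrable (NL L) (\<lambda>y. \<bar>v y\<bar>)" using iv by simp
      fix z show "\<bar>(indicator {0..x} z - indicator {0..y} z) * v z\<bar> \<le> \<bar>v z\<bar>"
        by (auto simp: indicator_def abs_mult)
    qed
    finally show ?thesis .
  qed
  have bnd: "\<bar>c + V x\<bar> \<le> D" if x: "x \<in> {0..L}" for x
  proof -
    have "integral\<^sup>L (NL L) (\<lambda>y. V x - V y) = L * V x - integral\<^sup>L (NL L) V"
      using iV L by (simp add: measure_NL)
    then have eq: "c + V x = integral\<^sup>L (NL L) (\<lambda>y. V x - V y) / L"
      using cV0 L by (simp add: field_simps)
    have "\<bar>integral\<^sup>L (NL L) (\<lambda>y. V x - V y)\<bar> \<le> integral\<^sup>L (NL L) (\<lambda>y. \<bar>V x - V y\<bar>)"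
      by (rule integral_abs_bound)
    also have "\<dots> \<le> integral\<^sup>L (NL L) (\<lambda>y. D)"
      by (rule integral_mono) (use iV dV[OF x] in auto)
    also have "\<dots> = L * D" using L by (simp add: measure_NL)
    finally have "\<bar>integral\<^sup>L (NL L) (\<lambda>y. V x - V y)\<bar> \<le> L * D" .
    then show ?thesis using eq L by (simp add: pos_divide_le_eq mult.commute)
  qed
  have D0: "0 \<le> D" unfolding D_def by simp
  have "ip L u u = integral\<^sup>L (NL L) (\<lambda>x. (c + V x)^2)"
    unfolding ip_def
    by (rule integral_cong_AE) (measurable, use c in \<open>eventually_elim, simp add: V_def power2_eq_square\<close>)
  also have "\<dots> \<le> integral\<^sup>L (NL L) (\<lambda>x. D^2)"
  proof (rule integral_mono)
    show "integrable (NL L) (\<lambda>x. (c + V x)^2)" by (rule cont_int_NL) (intro continuous_intros cV)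
    show "integrable (NL L) (\<lambda>x. D^2)" by simp
    fix x assume "x \<in> space (NL L)"
    then have "\<bar>c + V x\<bar> \<le> D" using bnd by simp
    then have "\<bar>c + V x\<bar>^2 \<le> D^2" by (rule power_mono) simp
    then show "(c + V x)^2 \<le> D^2" by simp
  qed
  also have "\<dots> = L * D^2" using L by (simp add: measure_NL)
  also have "D^2 \<le> ip L v v * L"
  proof -
    have Lav: "L2 L (\<lambda>x. \<bar>v x\<bar>)" using Lv unfolding L2_def by auto
    have "(ip L (\<lambda>x. \<bar>v x\<bar>) (\<lambda>x. 1))^2 \<le> ip L (\<lambda>x. \<bar>v x\<bar>) (\<lambda>x. \<bar>v x\<bar>) * ip L (\<lambda>x. 1) (\<lambda>x. 1)"
      by (rule ip_CS_sq[OF Lav L2_const])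
    moreover have "ip L (\<lambda>x. \<bar>v x\<bar>) (\<lambda>x. 1) = D" unfolding ip_def D_def by simp
    moreover have "ip L (\<lambda>x. \<bar>v x\<bar>) (\<lambda>x. \<bar>v x\<bar>) = ip L v v" unfolding ip_def
      by (simp add: abs_mult[symmetric])
    ultimately show ?thesis using ip_one[of L] L by simp
  qed
  then have "L * D^2 \<le> L * (ip L v v * L)" using L by (simp add: mult_left_mono)
  finally show ?thesis by (simp add: power2_eq_square mult.commute mult.left_commute)
qed

lemma ip_quot_identity:
  assumes As: "L2 L As" and At: "L2 L At" and Cs: "L2 L Cs" and Ct: "L2 L Ct"
    and B: "L2 L B" and D: "L2 L D"
  shows "(ip L As Cs - ip L At Ct) / h - (ip L B Ct + ip L At D)
      = ip L (\<lambda>x. (As x - At x) / h - B x) Ct + ip L (\<lambda>x. (As x - At x) / h - B x) (\<lambda>x. Cs x - Ct x)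
        + ip L B (\<lambda>x. Cs x - Ct x) + ip L At (\<lambda>x. (Cs x - Ct x) / h - D x)"
proof -
  have dA: "L2 L (\<lambda>x. As x - At x)" by (rule L2_diff[OF As At])
  have dC: "L2 L (\<lambda>x. Cs x - Ct x)" by (rule L2_diff[OF Cs Ct])
  have qA: "L2 L (\<lambda>x. (As x - At x) / h)" by (rule L2_div[OF dA])
  have qC: "L2 L (\<lambda>x. (Cs x - Ct x) / h)" by (rule L2_div[OF dC])
  have sA: "(\<lambda>x. (As x - At x) / h) = (\<lambda>x. (1/h) * (As x - At x))" by auto
  have sC: "(\<lambda>x. (Cs x - Ct x) / h) = (\<lambda>x. (1/h) * (Cs x - Ct x))" by auto
  have e1: "ip L (\<lambda>x. (As x - At x) / h - B x) Ct = ip L (\<lambda>x. (As x - At x) / h) Ct - ip L B Ct"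
    by (rule ip_diff_left[OF qA B Ct])
  have e2: "ip L (\<lambda>x. (As x - At x) / h - B x) (\<lambda>x. Cs x - Ct x)
      = ip L (\<lambda>x. (As x - At x) / h) (\<lambda>x. Cs x - Ct x) - ip L B (\<lambda>x. Cs x - Ct x)"
    by (rule ip_diff_left[OF qA B dC])
  have e3: "ip L (\<lambda>x. (As x - At x) / h) (\<lambda>x. Cs x - Ct x)
      = ip L (\<lambda>x. (As x - At x) / h) Cs - ip L (\<lambda>x. (As x - At x) / h) Ct"
    by (rule ip_diff_right[OF Cs Ct qA])
  have e4: "ip L B (\<lambda>x. Cs x - Ct x) = ip L B Cs - ip L B Ct"
    by (rule ip_diff_right[OF Cs Ct B])
  have e5: "ip L At (\<lambda>x. (Cs x - Ct x) / h - D x) = ip L At (\<lambda>x. (Cs x - Ct x) / h) - ip L At D"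
    by (rule ip_diff_right[OF qC D At])
  have e6: "ip L At (\<lambda>x. (Cs x - Ct x) / h) = (1/h) * (ip L At Cs - ip L At Ct)"
    unfolding sC ip_scale_right by (simp add: ip_diff_right[OF Cs Ct At])
  have e7: "ip L (\<lambda>x. (As x - At x) / h) Cs = (1/h) * (ip L As Cs - ip L At Cs)"
    unfolding sA ip_scale_left by (simp add: ip_diff_left[OF As At Cs])
  show ?thesis
    unfolding e1 e2 e3 e4 e5 e6 e7 by (simp add: diff_divide_distrib algebra_simps)
qed

lemma ip_deriv:
  fixes a b c d :: "real \<Rightarrow> real \<Rightarrow> real"
  assumes t: "0 \<le> t"
    and La: "\<And>s. 0 \<le> s \<Longrightarrow> L2 L (a s)" and Lc: "\<And>s. 0 \<le> s \<Longrightarrow> L2 L (c s)"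
    and Lb: "L2 L (b t)" and Ld: "L2 L (d t)"
    and cc: "((\<lambda>s. norm2 L (\<lambda>x. c s x - c t x)) \<longlongrightarrow> 0) (at t within {0..})"
    and da: "((\<lambda>s. norm2 L (\<lambda>x. (a s x - a t x) / (s - t) - b t x)) \<longlongrightarrow> 0) (at t within {0..})"
    and dc: "((\<lambda>s. norm2 L (\<lambda>x. (c s x - c t x) / (s - t) - d t x)) \<longlongrightarrow> 0) (at t within {0..})"
  shows "((\<lambda>s. ip L (a s) (c s)) has_real_derivative (ip L (b t) (c t) + ip L (a t) (d t))) (at t within {0..})"
proof -
  define F' where "F' = ip L (b t) (c t) + ip L (a t) (d t)"
  define E where "E = (\<lambda>s. (ip L (a s) (c s) - ip L (a t) (c t)) / (s - t) - F')"
  define g where "g = (\<lambda>s. norm2 L (\<lambda>x. (a s x - a t x) / (s - t) - b t x) * norm2 L (c t)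
       + norm2 L (\<lambda>x. (a s x - a t x) / (s - t) - b t x) * norm2 L (\<lambda>x. c s x - c t x)
       + norm2 L (b t) * norm2 L (\<lambda>x. c s x - c t x)
       + norm2 L (a t) * norm2 L (\<lambda>x. (c s x - c t x) / (s - t) - d t x))"
  have g0: "(g \<longlongrightarrow> 0) (at t within {0..})"
  proof -
    have "(g \<longlongrightarrow> 0 * norm2 L (c t) + 0 * 0 + norm2 L (b t) * 0 + norm2 L (a t) * 0) (at t within {0..})"
      unfolding g_def by (intro tendsto_intros da cc dc)
    then show ?thesis by simp
  qed
  have ev: "\<forall>\<^sub>F s in at t within {0..}. norm (E s) \<le> g s"
  proof -
    have "\<forall>\<^sub>F s in at t within {0..}. s \<in> {0..} \<and> s \<noteq> t"
      by (simp add: eventually_at_filter)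
    then show ?thesis
    proof eventually_elim
      case (elim s)
      then have s: "0 \<le> s" "s \<noteq> t" by auto
      have As: "L2 L (a s)" and At: "L2 L (a t)" and Cs: "L2 L (c s)" and Ct: "L2 L (c t)"
        using La Lc s t by auto
      have qA: "L2 L (\<lambda>x. (a s x - a t x) / (s - t) - b t x)"
        by (intro L2_diff L2_div Lb As At)
      have qC: "L2 L (\<lambda>x. (c s x - c t x) / (s - t) - d t x)"
        by (intro L2_diff L2_div Ld Cs Ct)
      have dC: "L2 L (\<lambda>x. c s x - c t x)" by (intro L2_diff Cs Ct)
      have "E s = ip L (\<lambda>x. (a s x - a t x) / (s - t) - b t x) (c t)
          + ip L (\<lambda>x. (a s x - a t x) / (s - t) - b t x) (\<lambda>x. c s x - c t x)
          + ip L (b t) (\<lambda>x. c s x - c t x) + ip L (a t) (\<lambda>x. (c s x - c t x) / (s - t) - d t x)"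
        unfolding E_def F'_def using ip_quot_identity[OF As At Cs Ct Lb Ld, of "s - t"] by simp
      also have "norm \<dots> \<le> g s"
      proof -
        have 1: "\<bar>ip L (\<lambda>x. (a s x - a t x) / (s - t) - b t x) (c t)\<bar>
           \<le> norm2 L (\<lambda>x. (a s x - a t x) / (s - t) - b t x) * norm2 L (c t)" by (rule ip_CS[OF qA Ct])
        have 2: "\<bar>ip L (\<lambda>x. (a s x - a t x) / (s - t) - b t x) (\<lambda>x. c s x - c t x)\<bar>
           \<le> norm2 L (\<lambda>x. (a s x - a t x) / (s - t) - b t x) * norm2 L (\<lambda>x. c s x - c t x)"
          by (rule ip_CS[OF qA dC])
        have 3: "\<bar>ip L (b t) (\<lambda>x. c s x - c t x)\<bar> \<le> norm2 L (b t) * norm2 L (\<lambda>x. c s x - c t x)"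
          by (rule ip_CS[OF Lb dC])
        have 4: "\<bar>ip L (a t) (\<lambda>x. (c s x - c t x) / (s - t) - d t x)\<bar>
           \<le> norm2 L (a t) * norm2 L (\<lambda>x. (c s x - c t x) / (s - t) - d t x)"
          by (rule ip_CS[OF At qC])
        show ?thesis unfolding g_def using 1 2 3 4 by simp
      qed
      finally show ?case .
    qed
  qed
  have "(E \<longlongrightarrow> 0) (at t within {0..})" by (rule Lim_null_comparison[OF ev g0])
  then have "((\<lambda>s. E s + F') \<longlongrightarrow> 0 + F') (at t within {0..})" by (intro tendsto_intros)
  then have "((\<lambda>s. (ip L (a s) (c s) - ip L (a t) (c t)) / (s - t)) \<longlongrightarrow> F') (at t within {0..})"
    unfolding E_def by simp
  then show ?thesis unfolding F'_def has_field_derivative_iff .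
qed

lemma Hk_comp:
  assumes "i \<le> k"
  shows "norm2 L (\<lambda>x. u i x - v i x) \<le> Hk_dist L k u v"
proof -
  have "(norm2 L (\<lambda>x. u i x - v i x))^2 \<le> (\<Sum>j\<le>k. (norm2 L (\<lambda>x. u j x - v j x))^2)"
    by (rule member_le_sum) (use assms in auto)
  then have "sqrt ((norm2 L (\<lambda>x. u i x - v i x))^2) \<le> Hk_dist L k u v"
    unfolding Hk_dist_def by (rule real_sqrt_le_mono)
  then show ?thesis using norm2_nonneg by simp
qed

lemma Hk_tendsto:
  assumes "((\<lambda>s. Hk_dist L k (u s) v) \<longlongrightarrow> 0) F" "i \<le> k"
  shows "((\<lambda>s. norm2 L (\<lambda>x. u s i x - v i x)) \<longlongrightarrow> 0) F"
proof (rule Lim_null_comparison[OF _ assms(1)])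
  show "\<forall>\<^sub>F s in F. norm (norm2 L (\<lambda>x. u s i x - v i x)) \<le> Hk_dist L k (u s) v"
    using Hk_comp[OF assms(2)] norm2_nonneg by simp
qed

lemma AE_NL_open:
  assumes "AE x in lborel. 0 < x \<and> x < L \<longrightarrow> P x"
  shows "AE x in NL L. P x"
proof -
  have "AE x in lborel. x \<in> {0..L} \<longrightarrow> P x"
    using assms AE_lborel_singleton[of 0] AE_lborel_singleton[of L]
    by eventually_elim auto
  then show ?thesis unfolding NL_def by (subst AE_restrict_space_iff) auto
qed

lemma ip_r_expand:
  assumes r: "AE x in NL L. r x = \<alpha> * f1 x - \<beta> * f2 x + \<gamma> * f3 x - \<delta> * f4 x"
    and L1: "L2 L f1" and L2': "L2 L f2" and L3: "L2 L f3" and L4: "L2 L f4" and Lu: "L2 L u" and Lr: "L2 L r"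
  shows "ip L u r = \<alpha> * ip L u f1 - \<beta> * ip L u f2 + \<gamma> * ip L u f3 - \<delta> * ip L u f4"
proof -
  have [measurable]: "u \<in> borel_measurable (NL L)" "r \<in> borel_measurable (NL L)"
    "f1 \<in> borel_measurable (NL L)" "f2 \<in> borel_measurable (NL L)"
    "f3 \<in> borel_measurable (NL L)" "f4 \<in> borel_measurable (NL L)"
    using L2_meas assms by auto
  have "ip L u r = integral\<^sup>L (NL L) (\<lambda>x. \<alpha> * (u x * f1 x) - \<beta> * (u x * f2 x) + \<gamma> * (u x * f3 x) - \<delta> * (u x * f4 x))"
    unfolding ip_def
  proof (rule integral_cong_AE)
    show "AE x in NL L. u x * r x = \<alpha> * (u x * f1 x) - \<beta> * (u x * f2 x) + \<gamma> * (u x * f3 x) - \<delta> * (u x * f4 x)"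
      using r
    proof eventually_elim
      case (elim x)
      show ?case by (simp add: elim algebra_simps)
    qed
  qed measurable
  also have "\<dots> = \<alpha> * ip L u f1 - \<beta> * ip L u f2 + \<gamma> * ip L u f3 - \<delta> * ip L u f4"
    unfolding ip_def using L2_prod[OF Lu L1] L2_prod[OF Lu L2'] L2_prod[OF Lu L3] L2_prod[OF Lu L4]
    by simp
  finally show ?thesis .
qed

lemma young: fixes a x y :: real assumes "0 < a" shows "x * y \<le> a * y^2 + x^2 / (4 * a)"
proof -
  have "0 \<le> (2 * a * y - x)^2 / (4 * a)" using assms by simp
  also have "(2 * a * y - x)^2 / (4 * a) = a * y^2 + x^2 / (4 * a) - x * y"
    using assms by (simp add: power2_eq_square field_simps)
  finally show ?thesis by simp
qed

lemma sqrt_prod_le: "0 \<le> a \<Longrightarrow> 0 \<le> b \<Longrightarrow> sqrt a * sqrt b \<le> (a + b) / 2"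
proof -
  assume a: "0 \<le> a" and b: "0 \<le> b"
  have "0 \<le> (sqrt a - sqrt b)^2" by simp
  also have "(sqrt a - sqrt b)^2 = a + b - 2 * (sqrt a * sqrt b)"
    using a b by (simp add: power2_diff)
  finally show ?thesis by simp
qed

lemma comparison:
  fixes V V' f :: "real \<Rightarrow> real"
  assumes D: "\<And>s. 0 \<le> s \<Longrightarrow> (V has_real_derivative V' s) (at s within {0..})"
    and ineq: "\<And>s. 0 \<le> s \<Longrightarrow> V' s \<le> - \<gamma> * V s + C * (f s)^2"
    and g: "0 < \<gamma>" and C: "0 \<le> C" and t: "0 \<le> t" and S: "0 \<le> S"
    and bnd: "\<And>s. s \<in> {0..t} \<Longrightarrow> exp (- (\<gamma>/4) * (t - s)) * \<bar>f s\<bar> \<le> S"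
  shows "V t \<le> exp (- \<gamma> * t) * V 0 + 2 * C * S^2 / \<gamma>"
proof -
  define a where "a = 2 * C * S^2 / \<gamma>"
  define G where "G = (\<lambda>s. exp (\<gamma> * s) * (V s - a * exp (\<gamma> * (t - s) / 2)))"
  have fb: "(f s)^2 \<le> S^2 * exp (\<gamma> * (t - s) / 2)" if "s \<in> {0..t}" for s
  proof -
    have "(exp (- (\<gamma>/4) * (t - s)) * \<bar>f s\<bar>)^2 \<le> S^2"
      by (rule power_mono[OF bnd[OF that]]) simp
    then have "exp (- (\<gamma>/4) * (t - s))^2 * (f s)^2 \<le> S^2" by (simp add: power_mult_distrib)
    moreover have "exp (- (\<gamma>/4) * (t - s))^2 = exp (- (\<gamma> * (t - s) / 2))"
      by (simp add: exp_double[symmetric] power2_eq_square exp_add[symmetric])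
    ultimately have "exp (- (\<gamma> * (t - s) / 2)) * (f s)^2 \<le> S^2" by simp
    then have "exp (\<gamma> * (t - s) / 2) * (exp (- (\<gamma> * (t - s) / 2)) * (f s)^2) \<le> exp (\<gamma> * (t - s) / 2) * S^2"
      by (rule mult_left_mono) simp
    then show ?thesis by (simp add: exp_minus field_simps)
  qed
  have contV: "continuous_on {0..t} V"
    unfolding continuous_on_eq_continuous_within
    using DERIV_continuous[OF D] continuous_within_subset by fastforce
  have contG: "continuous_on {0..t} G" unfolding G_def
    by (intro continuous_intros contV) auto
  have "G t \<le> G 0"
  proof (rule DERIV_nonpos_imp_decreasing_open[OF t _ contG])
    fix x assume x: "0 < x" "x < t"
    have Dx: "(V has_real_derivative V' x) (at x)"
    proof -
      have "at x within {0..} = at x" by (rule at_within_interior) (use x in auto)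
      then show ?thesis using D[of x] x by simp
    qed
    have DG: "(G has_real_derivative
        exp (\<gamma> * x) * \<gamma> * (V x - a * exp (\<gamma> * (t - x) / 2))
        + exp (\<gamma> * x) * (V' x - a * (exp (\<gamma> * (t - x) / 2) * (- \<gamma> / 2)))) (at x)"
      unfolding G_def
      by (auto intro!: derivative_eq_intros Dx simp: algebra_simps)
    have "exp (\<gamma> * x) * \<gamma> * (V x - a * exp (\<gamma> * (t - x) / 2))
        + exp (\<gamma> * x) * (V' x - a * (exp (\<gamma> * (t - x) / 2) * (- \<gamma> / 2)))
        = exp (\<gamma> * x) * (V' x + \<gamma> * V x - C * S^2 * exp (\<gamma> * (t - x) / 2))"
      unfolding a_def using g by (simp add: field_simps)
    also have "\<dots> \<le> 0"
    proof -
      have "V' x + \<gamma> * V x \<le> C * (f x)^2" using ineq[of x] x by simp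
      also have "\<dots> \<le> C * (S^2 * exp (\<gamma> * (t - x) / 2))"
        by (rule mult_left_mono[OF fb C]) (use x in auto)
      finally have "V' x + \<gamma> * V x - C * S^2 * exp (\<gamma> * (t - x) / 2) \<le> 0" by simp
      then show ?thesis by (simp add: mult_le_0_iff)
    qed
    finally show "\<exists>y. (G has_real_derivative y) (at x) \<and> y \<le> 0" using DG by blast
  qed
  then have "exp (\<gamma> * t) * (V t - a) \<le> V 0 - a * exp (\<gamma> * t / 2)"
    unfolding G_def by simp
  moreover have "0 \<le> a * exp (\<gamma> * t / 2)" unfolding a_def using C g by simp
  ultimately have "exp (\<gamma> * t) * (V t - a) \<le> V 0" by linarith
  then have "V t - a \<le> exp (- \<gamma> * t) * V 0"
    by (simp add: exp_minus field_simps)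
  then show ?thesis unfolding a_def by simp
qed

lemma energy_alg:
  fixes L c2 sh \<mu> \<kappa> hs \<epsilon> A0 A1 A2 B Q1 X I1 J1 F :: real
  assumes L: "0 < L" and c2: "0 < c2" and sh: "0 < sh" and mu: "0 < \<mu>" and ka: "0 \<le> \<kappa>" and hs: "0 < hs"
    and e0: "0 < \<epsilon>" and e1: "\<epsilon> \<le> 1/2" and e2: "\<epsilon> * L^2 \<le> c2 / 2" and e3: "\<epsilon> * L^2 \<le> \<mu> / 4"
    and nA0: "0 \<le> A0" and nA1: "0 \<le> A1" and nA2: "0 \<le> A2" and nB: "0 \<le> B" and nQ: "0 \<le> Q1"
    and pA0: "A0 \<le> L^2 * A1" and pB: "B \<le> L^2 * Q1"
    and bI: "\<bar>I1\<bar> \<le> sqrt L * sqrt Q1" and bJ: "\<bar>J1\<bar> \<le> sqrt L * sqrt A1"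
    and bX: "\<bar>X\<bar> \<le> (A0 + B) / 2"
  defines "V \<equiv> 1/2 * B + c2/2 * A1 + sh/2 * A2 + \<epsilon> * (X + \<mu>/2 * A1 + \<kappa>/2 * A0)"
    and "Mx \<equiv> 1 + c2 + \<mu> + sh + \<kappa>"
    and "\<delta> \<equiv> min (\<mu> / (2 * L^2)) (min (\<epsilon> * c2 / (2 * (1 + L^2))) (\<epsilon> * sh))"
    and "Cst \<equiv> hs^2 * L / \<mu> + \<epsilon> * hs^2 * L / (2 * c2)"
    and "m0 \<equiv> min (1/4) (min (c2/4) (sh/2)) / (1 + L^2)"
  shows "V \<le> Mx * (A0 + A1 + A2 + B)"
    and "m0 * (A0 + A1 + A2 + B) \<le> V"
    and "hs * F * I1 - \<mu> * Q1 - \<kappa> * B + \<epsilon> * (B - c2 * A1 - sh * A2 + hs * F * J1)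
          \<le> - (\<delta> / Mx) * V + Cst * F^2"
proof -
  have hL: "0 < 1 + L^2" by (simp add: add_pos_nonneg)
  have eX: "\<epsilon> * \<bar>X\<bar> \<le> \<epsilon> * ((A0 + B) / 2)" by (rule mult_left_mono[OF bX]) (use e0 in simp)
  have eXl: "- (\<epsilon> * \<bar>X\<bar>) \<le> \<epsilon> * X" "\<epsilon> * X \<le> \<epsilon> * \<bar>X\<bar>"
    using e0 by (auto simp: abs_if mult_less_0_iff)
  have t1: "\<epsilon> * (\<mu>/2 * A1) \<le> 1/2 * (\<mu>/2 * A1)" by (rule mult_right_mono[OF e1]) (use mu nA1 in simp)
  have t2: "\<epsilon> * (\<kappa>/2 * A0) \<le> 1/2 * (\<kappa>/2 * A0)" by (rule mult_right_mono[OF e1]) (use ka nA0 in simp)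
  have t3: "\<epsilon> * ((A0 + B) / 2) \<le> 1/2 * ((A0 + B) / 2)" by (rule mult_right_mono[OF e1]) (use nA0 nB in simp)
  have Vexp: "V = B/2 + c2/2 * A1 + sh/2 * A2 + \<epsilon> * X + \<epsilon> * (\<mu>/2 * A1) + \<epsilon> * (\<kappa>/2 * A0)"
    unfolding V_def by (simp add: algebra_simps)
  show Vup: "V \<le> Mx * (A0 + A1 + A2 + B)"
  proof -
    have "V \<le> B/2 + c2/2 * A1 + sh/2 * A2 + 1/2 * ((A0 + B) / 2) + 1/2 * (\<mu>/2 * A1) + 1/2 * (\<kappa>/2 * A0)"
      unfolding Vexp using eX eXl t1 t2 t3 by linarith
    also have "\<dots> = (1/4 + \<kappa>/4) * A0 + (c2/2 + \<mu>/4) * A1 + (sh/2) * A2 + (3/4) * B"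
      by (simp add: algebra_simps add_divide_distrib)
    also have "\<dots> \<le> Mx * A0 + Mx * A1 + Mx * A2 + Mx * B"
    proof -
      have "(1/4 + \<kappa>/4) * A0 \<le> Mx * A0" by (rule mult_right_mono[OF _ nA0]) (use c2 mu sh ka in \<open>simp add: Mx_def\<close>)
      moreover have "(c2/2 + \<mu>/4) * A1 \<le> Mx * A1" by (rule mult_right_mono[OF _ nA1]) (use c2 mu sh ka in \<open>simp add: Mx_def\<close>)
      moreover have "(sh/2) * A2 \<le> Mx * A2" by (rule mult_right_mono[OF _ nA2]) (use c2 mu sh ka in \<open>simp add: Mx_def\<close>)
      moreover have "(3/4) * B \<le> Mx * B" by (rule mult_right_mono[OF _ nB]) (use c2 mu sh ka in \<open>simp add: Mx_def\<close>)
      ultimately show ?thesis by linarith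
    qed
    also have "\<dots> = Mx * (A0 + A1 + A2 + B)" by (simp add: algebra_simps)
    finally show ?thesis .
  qed
  have eL: "\<epsilon> * L^2 * A1 \<le> c2 / 2 * A1" by (rule mult_right_mono[OF e2 nA1])
  have eA0: "\<epsilon> * A0 \<le> \<epsilon> * (L^2 * A1)" by (rule mult_left_mono[OF pA0]) (use e0 in simp)
  have eB: "\<epsilon> * B \<le> 1/2 * B" by (rule mult_right_mono[OF e1 nB])
  have nmu: "0 \<le> \<epsilon> * (\<mu>/2 * A1)" "0 \<le> \<epsilon> * (\<kappa>/2 * A0)" using e0 mu ka nA1 nA0 by auto
  have Vlow: "B/4 + c2/4 * A1 + sh/2 * A2 \<le> V"
    unfolding Vexp using eX eXl eL eA0 eB nmu by (simp add: algebra_simps)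
  show "m0 * (A0 + A1 + A2 + B) \<le> V"
  proof -
    define mm where "mm = min (1/4) (min (c2/4) (sh/2))"
    have mm0: "0 \<le> mm" unfolding mm_def using c2 sh by simp
    have "mm * (A1 + A2 + B) \<le> B/4 + c2/4 * A1 + sh/2 * A2"
    proof -
      have "mm * B \<le> 1/4 * B" by (rule mult_right_mono) (auto simp: mm_def nB)
      moreover have "mm * A1 \<le> c2/4 * A1" by (rule mult_right_mono) (auto simp: mm_def nA1)
      moreover have "mm * A2 \<le> sh/2 * A2" by (rule mult_right_mono) (auto simp: mm_def nA2)
      ultimately show ?thesis by (simp add: algebra_simps)
    qed
    moreover have "A0 + A1 + A2 + B \<le> (1 + L^2) * (A1 + A2 + B)"
    proof -
      have "L^2 * A1 \<le> L^2 * (A1 + A2 + B)" by (rule mult_left_mono) (use nA2 nB in auto)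
      then show ?thesis using pA0 by (simp add: algebra_simps)
    qed
    then have "mm / (1 + L^2) * (A0 + A1 + A2 + B) \<le> mm / (1 + L^2) * ((1 + L^2) * (A1 + A2 + B))"
      by (rule mult_left_mono) (use mm0 in simp)
    moreover have "mm / (1 + L^2) * ((1 + L^2) * (A1 + A2 + B)) = mm * (A1 + A2 + B)"
      using hL by (simp add: field_simps)
    ultimately show ?thesis unfolding m0_def mm_def[symmetric] using Vlow by linarith
  qed
  have y1: "hs * F * I1 \<le> \<mu>/4 * Q1 + hs^2 * L / \<mu> * F^2"
  proof -
    have "hs * F * I1 \<le> (hs * \<bar>F\<bar> * sqrt L) * sqrt Q1"
    proof -
      have "hs * F * I1 \<le> \<bar>hs * F\<bar> * \<bar>I1\<bar>" by (simp add: abs_mult[symmetric])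
      also have "\<dots> \<le> \<bar>hs * F\<bar> * (sqrt L * sqrt Q1)" by (rule mult_left_mono[OF bI]) simp
      finally show ?thesis using hs by (simp add: abs_mult mult.assoc)
    qed
    also have "\<dots> \<le> \<mu>/4 * (sqrt Q1)^2 + (hs * \<bar>F\<bar> * sqrt L)^2 / (4 * (\<mu>/4))"
      by (rule young) (use mu in simp)
    also have "\<dots> = \<mu>/4 * Q1 + hs^2 * L / \<mu> * F^2"
      using nQ L mu by (simp add: power_mult_distrib field_simps)
    finally show ?thesis .
  qed
  have y2: "\<epsilon> * (hs * F * J1) \<le> \<epsilon> * (c2/2 * A1 + hs^2 * L / (2 * c2) * F^2)"
  proof (rule mult_left_mono)
    have "hs * F * J1 \<le> (hs * \<bar>F\<bar> * sqrt L) * sqrt A1"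
    proof -
      have "hs * F * J1 \<le> \<bar>hs * F\<bar> * \<bar>J1\<bar>" by (simp add: abs_mult[symmetric])
      also have "\<dots> \<le> \<bar>hs * F\<bar> * (sqrt L * sqrt A1)" by (rule mult_left_mono[OF bJ]) simp
      finally show ?thesis using hs by (simp add: abs_mult mult.assoc)
    qed
    also have "\<dots> \<le> c2/2 * (sqrt A1)^2 + (hs * \<bar>F\<bar> * sqrt L)^2 / (4 * (c2/2))"
      by (rule young) (use c2 in simp)
    also have "\<dots> = c2/2 * A1 + hs^2 * L / (2 * c2) * F^2"
      using nA1 L c2 by (simp add: power_mult_distrib field_simps)
    finally show "hs * F * J1 \<le> c2/2 * A1 + hs^2 * L / (2 * c2) * F^2" .
  qed (use e0 in simp)
  have eBQ: "\<epsilon> * B \<le> \<mu>/4 * Q1"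
  proof -
    have "\<epsilon> * B \<le> \<epsilon> * (L^2 * Q1)" by (rule mult_left_mono[OF pB]) (use e0 in simp)
    also have "\<dots> = (\<epsilon> * L^2) * Q1" by simp
    also have "\<dots> \<le> \<mu>/4 * Q1" by (rule mult_right_mono[OF e3 nQ])
    finally show ?thesis .
  qed
  have kB: "0 \<le> \<kappa> * B" using ka nB by simp
  have step1: "hs * F * I1 - \<mu> * Q1 - \<kappa> * B + \<epsilon> * (B - c2 * A1 - sh * A2 + hs * F * J1)
      \<le> - (\<mu>/2 * Q1 + \<epsilon> * (c2/2) * A1 + \<epsilon> * sh * A2) + Cst * F^2"
    using y1 y2 eBQ kB unfolding Cst_def by (simp add: algebra_simps)
  have QB: "\<mu> / (2 * L^2) * B \<le> \<mu>/2 * Q1"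
  proof -
    have "\<mu> / (2 * L^2) * B \<le> \<mu> / (2 * L^2) * (L^2 * Q1)" by (rule mult_left_mono[OF pB]) (use mu L in simp)
    also have "\<dots> = \<mu>/2 * Q1" using L by (simp add: field_simps)
    finally show ?thesis .
  qed
  have d0: "0 \<le> \<delta>" unfolding \<delta>_def using mu L e0 c2 sh by simp
  have diss: "\<delta> * ((1 + L^2) * A1 + A2 + B) \<le> \<mu>/2 * Q1 + \<epsilon> * (c2/2) * A1 + \<epsilon> * sh * A2"
  proof -
    have a: "\<delta> * B \<le> \<mu> / (2 * L^2) * B" by (rule mult_right_mono) (auto simp: \<delta>_def nB)
    have "\<delta> * (1 + L^2) \<le> \<epsilon> * c2 / (2 * (1 + L^2)) * (1 + L^2)"
      by (rule mult_right_mono) (auto simp: \<delta>_def add_pos_nonneg)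
    also have "\<dots> = \<epsilon> * (c2/2)" using hL by (simp add: field_simps)
    finally have "\<delta> * (1 + L^2) * A1 \<le> \<epsilon> * (c2/2) * A1" by (rule mult_right_mono[OF _ nA1])
    moreover have "\<delta> * A2 \<le> \<epsilon> * sh * A2" by (rule mult_right_mono) (auto simp: \<delta>_def nA2)
    ultimately show ?thesis using a QB by (simp add: algebra_simps)
  qed
  have Mx0: "0 < Mx" unfolding Mx_def using c2 mu sh ka by simp
  have "\<delta> / Mx * V \<le> \<delta> / Mx * (Mx * (A0 + A1 + A2 + B))"
    by (rule mult_left_mono[OF Vup]) (use d0 Mx0 in simp)
  also have "\<dots> = \<delta> * (A0 + A1 + A2 + B)" using Mx0 by simp
  also have "\<dots> \<le> \<delta> * ((1 + L^2) * A1 + A2 + B)"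
    by (rule mult_left_mono[OF _ d0]) (use pA0 in \<open>simp add: algebra_simps\<close>)
  finally have "\<delta> / Mx * V \<le> \<mu>/2 * Q1 + \<epsilon> * (c2/2) * A1 + \<epsilon> * sh * A2" using diss by linarith
  then show "hs * F * I1 - \<mu> * Q1 - \<kappa> * B + \<epsilon> * (B - c2 * A1 - sh * A2 + hs * F * J1)
          \<le> - (\<delta> / Mx) * V + Cst * F^2" using step1 by simp
qed

definition "eps5 L hs g \<mu> = min (1/2) (min (g*hs / (2 * L^2)) (\<mu> / (4 * L^2)))"
definition "Mx5 hs g \<mu> \<sigma> \<kappa> = 1 + g*hs + \<mu> + \<sigma>*hs + \<kappa>"
definition "del5 L hs g \<mu> \<sigma> = min (\<mu> / (2 * L^2)) (min (eps5 L hs g \<mu> * (g*hs) / (2 * (1 + L^2))) (eps5 L hs g \<mu> * (\<sigma>*hs)))"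
definition "gam5 L hs g \<mu> \<sigma> \<kappa> = del5 L hs g \<mu> \<sigma> / Mx5 hs g \<mu> \<sigma> \<kappa>"
definition "C5 L hs g \<mu> = hs^2 * L / \<mu> + eps5 L hs g \<mu> * hs^2 * L / (2 * (g*hs))"
definition "m5 L hs g \<sigma> = min (1/4) (min (g*hs/4) (\<sigma>*hs/2)) / (1 + L^2)"
definition "M5 L hs g \<mu> \<sigma> \<kappa> = sqrt (Mx5 hs g \<mu> \<sigma> \<kappa> / m5 L hs g \<sigma>)"
definition "lam5 L hs g \<mu> \<sigma> \<kappa> = gam5 L hs g \<mu> \<sigma> \<kappa> / 4"
definition "G5 L hs g \<mu> \<sigma> \<kappa> = sqrt (2 * C5 L hs g \<mu> / (gam5 L hs g \<mu> \<sigma> \<kappa> * m5 L hs g \<sigma>)) + 1"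

lemma consts_pos:
  fixes L hs g \<mu> \<sigma> \<kappa> :: real
  assumes "L > 0" "hs > 0" "g > 0" "\<mu> > 0" "\<sigma> > 0" "\<kappa> \<ge> 0"
  shows "eps5 L hs g \<mu> > 0" "eps5 L hs g \<mu> \<le> 1/2"
    "eps5 L hs g \<mu> * L^2 \<le> g*hs/2" "eps5 L hs g \<mu> * L^2 \<le> \<mu>/4"
    "Mx5 hs g \<mu> \<sigma> \<kappa> > 0" "del5 L hs g \<mu> \<sigma> > 0" "gam5 L hs g \<mu> \<sigma> \<kappa> > 0"
    "C5 L hs g \<mu> \<ge> 0" "m5 L hs g \<sigma> > 0" "M5 L hs g \<mu> \<sigma> \<kappa> > 0"
    "lam5 L hs g \<mu> \<sigma> \<kappa> > 0" "G5 L hs g \<mu> \<sigma> \<kappa> > 0"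
proof -
  have L2: "L^2 > 0" using assms by simp
  show e0: "eps5 L hs g \<mu> > 0" unfolding eps5_def using assms by simp
  show "eps5 L hs g \<mu> \<le> 1/2" unfolding eps5_def by simp
  have "eps5 L hs g \<mu> \<le> g*hs / (2 * L^2)" unfolding eps5_def by simp
  then have "eps5 L hs g \<mu> * L^2 \<le> g*hs / (2 * L^2) * L^2" by (rule mult_right_mono) simp
  then show "eps5 L hs g \<mu> * L^2 \<le> g*hs/2" using L2 by simp
  have "eps5 L hs g \<mu> \<le> \<mu> / (4 * L^2)" unfolding eps5_def by simp
  then have "eps5 L hs g \<mu> * L^2 \<le> \<mu> / (4 * L^2) * L^2" by (rule mult_right_mono) simp
  then show "eps5 L hs g \<mu> * L^2 \<le> \<mu>/4" using L2 by simp
  have gh: "0 < g*hs" "0 < \<sigma>*hs" using assms by simp_all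
  show Mx: "Mx5 hs g \<mu> \<sigma> \<kappa> > 0" unfolding Mx5_def using assms gh by linarith
  have hL: "0 < 1 + L^2" using L2 by linarith
  have B: "0 < eps5 L hs g \<mu> * (g * hs) / (2 * (1 + L^2))"
    using e0 gh hL assms by (intro divide_pos_pos mult_pos_pos) auto
  have A: "0 < \<mu> / (2 * L^2)" using assms L2 by simp
  have C: "0 < eps5 L hs g \<mu> * (\<sigma>*hs)" using e0 gh by simp
  show d: "del5 L hs g \<mu> \<sigma> > 0" unfolding del5_def using A B C by linarith
  show gm: "gam5 L hs g \<mu> \<sigma> \<kappa> > 0" unfolding gam5_def using d Mx by simp
  show C0: "C5 L hs g \<mu> \<ge> 0" unfolding C5_def using assms e0 by simp
  show m: "m5 L hs g \<sigma> > 0" unfolding m5_def using assms hL by simp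
  show "M5 L hs g \<mu> \<sigma> \<kappa> > 0" unfolding M5_def using Mx m by simp
  show "lam5 L hs g \<mu> \<sigma> \<kappa> > 0" unfolding lam5_def using gm by simp
  have "0 \<le> 2 * C5 L hs g \<mu> / (gam5 L hs g \<mu> \<sigma> \<kappa> * m5 L hs g \<sigma>)"
    using C0 gm m by simp
  then have "0 \<le> sqrt (2 * C5 L hs g \<mu> / (gam5 L hs g \<mu> \<sigma> \<kappa> * m5 L hs g \<sigma>))" by simp
  then show "G5 L hs g \<mu> \<sigma> \<kappa> > 0" unfolding G5_def by linarith
qed

context
  fixes L hs g \<mu> \<sigma> \<kappa> :: real and f :: "real \<Rightarrow> real"
    and p q :: "nat \<Rightarrow> real \<Rightarrow> real \<Rightarrow> real" and r :: "real \<Rightarrow> real \<Rightarrow> real"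
  assumes pos: "L > 0" "hs > 0" "g > 0" "\<mu> > 0" "\<sigma> > 0" "\<kappa> \<ge> 0"
    and fc: "continuous_on {0..} f"
    and H: "\<forall>t\<ge>0.
           (\<forall>i\<le>4. in_L2 L (p i t)) \<and> (\<forall>i<4. weak_deriv L (p i t) (p (Suc i) t))
         \<and> continuous_on {0..L} (p 1 t) \<and> continuous_on {0..L} (p 3 t)
         \<and> (\<forall>i\<le>2. in_L2 L (q i t)) \<and> (\<forall>i<2. weak_deriv L (q i t) (q (Suc i) t))
         \<and> continuous_on {0..L} (q 1 t)
         \<and> in_L2 L (r t)
         \<and> p 1 t 0 = 0 \<and> p 1 t L = 0
         \<and> q 1 t 0 = 0 \<and> q 1 t L = 0
         \<and> p 3 t 0 = - f t / \<sigma> \<and> p 3 t L = - f t / \<sigma>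
         \<and> (AE x in lborel. 0 < x \<and> x < L \<longrightarrow>
              r t x = (sqrt (g * hs))^2 * p 2 t x - \<sigma> * hs * p 4 t x
                      + \<mu> * q 2 t x - \<kappa> * q 0 t x)
         \<and> (LINT x:{0..L}|lborel. p 0 t x) = 0
         \<and> (LINT x:{0..L}|lborel. q 0 t x) = 0
         \<and> ((\<lambda>s. Hk_dist L 4 (\<lambda>i. p i s) (\<lambda>i. p i t)) \<longlongrightarrow> 0) (at t within {0..})
         \<and> ((\<lambda>s. Hk_dist L 2 (\<lambda>i x. (p i s x - p i t x) / (s - t)) (\<lambda>i. q i t)) \<longlongrightarrow> 0)
              (at t within {0..})
         \<and> ((\<lambda>s. Hk_dist L 2 (\<lambda>i. q i s) (\<lambda>i. q i t)) \<longlongrightarrow> 0) (at t within {0..})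
         \<and> ((\<lambda>s. norm2 L (\<lambda>x. (q 0 s x - q 0 t x) / (s - t) - r t x)) \<longlongrightarrow> 0)
              (at t within {0..})
         \<and> ((\<lambda>s. norm2 L (\<lambda>x. r s x - r t x)) \<longlongrightarrow> 0) (at t within {0..})"
begin

lemma L2p: "0 \<le> s \<Longrightarrow> i \<le> 4 \<Longrightarrow> L2 L (p i s)"
  using H in_L2_iff by blast
lemma L2q: "0 \<le> s \<Longrightarrow> i \<le> 2 \<Longrightarrow> L2 L (q i s)"
  using H in_L2_iff by blast
lemma L2r: "0 \<le> s \<Longrightarrow> L2 L (r s)"
  using H in_L2_iff by blast
lemma wdp: "0 \<le> s \<Longrightarrow> i < 4 \<Longrightarrow> weak_deriv L (p i s) (p (Suc i) s)"
  using H by blast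
lemma wdq: "0 \<le> s \<Longrightarrow> i < 2 \<Longrightarrow> weak_deriv L (q i s) (q (Suc i) s)"
  using H by blast
lemma contp1: "0 \<le> s \<Longrightarrow> continuous_on {0..L} (p 1 s)" using H by blast
lemma contp3: "0 \<le> s \<Longrightarrow> continuous_on {0..L} (p 3 s)" using H by blast
lemma contq1: "0 \<le> s \<Longrightarrow> continuous_on {0..L} (q 1 s)" using H by blast
lemma bcs: "0 \<le> s \<Longrightarrow> p 1 s 0 = 0 \<and> p 1 s L = 0 \<and> q 1 s 0 = 0 \<and> q 1 s L = 0
   \<and> p 3 s 0 = - f s / \<sigma> \<and> p 3 s L = - f s / \<sigma>" using H by blast
lemma means: "0 \<le> s \<Longrightarrow> integral\<^sup>L (NL L) (p 0 s) = 0 \<and> integral\<^sup>L (NL L) (q 0 s) = 0"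
  using H LINT_NL by metis
lemma aeq0: "0 \<le> s \<Longrightarrow> AE x in lborel. 0 < x \<and> x < L \<longrightarrow>
              r s x = (sqrt (g * hs))^2 * p 2 s x - \<sigma> * hs * p 4 s x + \<mu> * q 2 s x - \<kappa> * q 0 s x"
  using H by blast
lemma lim15: "0 \<le> t \<Longrightarrow> ((\<lambda>s. Hk_dist L 4 (\<lambda>i. p i s) (\<lambda>i. p i t)) \<longlongrightarrow> 0) (at t within {0..})"
  using H by blast
lemma lim16: "0 \<le> t \<Longrightarrow> ((\<lambda>s. Hk_dist L 2 (\<lambda>i x. (p i s x - p i t x) / (s - t)) (\<lambda>i. q i t)) \<longlongrightarrow> 0) (at t within {0..})"
  using H by blast
lemma lim17: "0 \<le> t \<Longrightarrow> ((\<lambda>s. Hk_dist L 2 (\<lambda>i. q i s) (\<lambda>i. q i t)) \<longlongrightarrow> 0) (at t within {0..})"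
  using H by blast
lemma lim18: "0 \<le> t \<Longrightarrow> ((\<lambda>s. norm2 L (\<lambda>x. (q 0 s x - q 0 t x) / (s - t) - r t x)) \<longlongrightarrow> 0) (at t within {0..})"
  using H by blast

lemma aeq: "0 \<le> s \<Longrightarrow> AE x in NL L. r s x = (g * hs) * p 2 s x - (\<sigma> * hs) * p 4 s x + \<mu> * q 2 s x - \<kappa> * q 0 s x"
proof -
  assume s: "0 \<le> s"
  have "(sqrt (g * hs))^2 = g * hs" using pos by simp
  then show ?thesis using AE_NL_open[OF aeq0[OF s]] by simp
qed


lemma dP:
  assumes t: "0 \<le> t" and i: "i \<le> 2"
  shows "((\<lambda>s. ip L (p i s) (p i s)) has_real_derivative (ip L (q i t) (p i t) + ip L (p i t) (q i t))) (at t within {0..})"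
proof (rule ip_deriv[where a="\<lambda>s. p i s" and c="\<lambda>s. p i s" and b="\<lambda>s. q i s" and d="\<lambda>s. q i s", OF t])
  show "\<And>s. 0 \<le> s \<Longrightarrow> L2 L (p i s)" using L2p i by auto
  then show "\<And>s. 0 \<le> s \<Longrightarrow> L2 L (p i s)" .
  show "L2 L (q i t)" using L2q t i by auto
  then show "L2 L (q i t)" .
  show "((\<lambda>s. norm2 L (\<lambda>x. p i s x - p i t x)) \<longlongrightarrow> 0) (at t within {0..})"
    using Hk_tendsto[OF lim15[OF t], of i] i by simp
  show "((\<lambda>s. norm2 L (\<lambda>x. (p i s x - p i t x) / (s - t) - q i t x)) \<longlongrightarrow> 0) (at t within {0..})"
    using Hk_tendsto[OF lim16[OF t], of i] i by simp
  then show "((\<lambda>s. norm2 L (\<lambda>x. (p i s x - p i t x) / (s - t) - q i t x)) \<longlongrightarrow> 0) (at t within {0..})" .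
qed

lemma dB:
  assumes t: "0 \<le> t"
  shows "((\<lambda>s. ip L (q 0 s) (q 0 s)) has_real_derivative (ip L (r t) (q 0 t) + ip L (q 0 t) (r t))) (at t within {0..})"
proof (rule ip_deriv[where a="\<lambda>s. q 0 s" and c="\<lambda>s. q 0 s" and b="r" and d="r", OF t])
  show "\<And>s. 0 \<le> s \<Longrightarrow> L2 L (q 0 s)" using L2q by auto
  then show "\<And>s. 0 \<le> s \<Longrightarrow> L2 L (q 0 s)" .
  show "L2 L (r t)" using L2r t by auto
  then show "L2 L (r t)" .
  show "((\<lambda>s. norm2 L (\<lambda>x. q 0 s x - q 0 t x)) \<longlongrightarrow> 0) (at t within {0..})"
    using Hk_tendsto[OF lim17[OF t], of 0] by simp
  show "((\<lambda>s. norm2 L (\<lambda>x. (q 0 s x - q 0 t x) / (s - t) - r t x)) \<longlongrightarrow> 0) (at t within {0..})"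
    by (rule lim18[OF t])
  then show "((\<lambda>s. norm2 L (\<lambda>x. (q 0 s x - q 0 t x) / (s - t) - r t x)) \<longlongrightarrow> 0) (at t within {0..})" .
qed

lemma dX:
  assumes t: "0 \<le> t"
  shows "((\<lambda>s. ip L (p 0 s) (q 0 s)) has_real_derivative (ip L (q 0 t) (q 0 t) + ip L (p 0 t) (r t))) (at t within {0..})"
proof (rule ip_deriv[where a="\<lambda>s. p 0 s" and c="\<lambda>s. q 0 s" and b="\<lambda>s. q 0 s" and d="r", OF t])
  show "\<And>s. 0 \<le> s \<Longrightarrow> L2 L (p 0 s)" using L2p by auto
  show "\<And>s. 0 \<le> s \<Longrightarrow> L2 L (q 0 s)" using L2q by auto
  show "L2 L (q 0 t)" using L2q t by auto
  show "L2 L (r t)" using L2r t by auto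
  show "((\<lambda>s. norm2 L (\<lambda>x. q 0 s x - q 0 t x)) \<longlongrightarrow> 0) (at t within {0..})"
    using Hk_tendsto[OF lim17[OF t], of 0] by simp
  show "((\<lambda>s. norm2 L (\<lambda>x. (p 0 s x - p 0 t x) / (s - t) - q 0 t x)) \<longlongrightarrow> 0) (at t within {0..})"
    using Hk_tendsto[OF lim16[OF t], of 0] by simp
  show "((\<lambda>s. norm2 L (\<lambda>x. (q 0 s x - q 0 t x) / (s - t) - r t x)) \<longlongrightarrow> 0) (at t within {0..})"
    by (rule lim18[OF t])
qed

definition Vf :: "real \<Rightarrow> real \<Rightarrow> real" where
  "Vf \<epsilon> s = 1/2 * ip L (q 0 s) (q 0 s) + g * hs / 2 * ip L (p 1 s) (p 1 s) + \<sigma> * hs / 2 * ip L (p 2 s) (p 2 s)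
     + \<epsilon> * (ip L (p 0 s) (q 0 s) + \<mu> / 2 * ip L (p 1 s) (p 1 s) + \<kappa> / 2 * ip L (p 0 s) (p 0 s))"

definition Vd :: "real \<Rightarrow> real \<Rightarrow> real" where
  "Vd \<epsilon> t = 1/2 * (ip L (r t) (q 0 t) + ip L (q 0 t) (r t))
     + g * hs / 2 * (ip L (q 1 t) (p 1 t) + ip L (p 1 t) (q 1 t))
     + \<sigma> * hs / 2 * (ip L (q 2 t) (p 2 t) + ip L (p 2 t) (q 2 t))
     + \<epsilon> * ((ip L (q 0 t) (q 0 t) + ip L (p 0 t) (r t))
         + \<mu> / 2 * (ip L (q 1 t) (p 1 t) + ip L (p 1 t) (q 1 t))
         + \<kappa> / 2 * (ip L (q 0 t) (p 0 t) + ip L (p 0 t) (q 0 t)))"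

lemma dV:
  assumes t: "0 \<le> t"
  shows "((\<lambda>s. Vf \<epsilon> s) has_real_derivative Vd \<epsilon> t) (at t within {0..})"
proof -
  have d0: "((\<lambda>s. ip L (p 0 s) (p 0 s)) has_real_derivative (ip L (q 0 t) (p 0 t) + ip L (p 0 t) (q 0 t))) (at t within {0..})"
    using dP[OF t, of 0] by simp
  have d1: "((\<lambda>s. ip L (p 1 s) (p 1 s)) has_real_derivative (ip L (q 1 t) (p 1 t) + ip L (p 1 t) (q 1 t))) (at t within {0..})"
    using dP[OF t, of 1] by simp
  have d2: "((\<lambda>s. ip L (p 2 s) (p 2 s)) has_real_derivative (ip L (q 2 t) (p 2 t) + ip L (p 2 t) (q 2 t))) (at t within {0..})"
    using dP[OF t, of 2] by simp
  show ?thesis unfolding Vf_def Vd_def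
    by (intro DERIV_add DERIV_cmult d0 d1 d2 dB[OF t] dX[OF t])
qed

lemma energy_identity:
  assumes t: "0 \<le> t"
  shows "Vd \<epsilon> t = hs * f t * integral\<^sup>L (NL L) (q 1 t) - \<mu> * ip L (q 1 t) (q 1 t) - \<kappa> * ip L (q 0 t) (q 0 t)
    + \<epsilon> * (ip L (q 0 t) (q 0 t) - g * hs * ip L (p 1 t) (p 1 t) - \<sigma> * hs * ip L (p 2 t) (p 2 t)
             + hs * f t * integral\<^sup>L (NL L) (p 1 t))"
proof -
  have Lp0: "L2 L (p 0 t)" and Lp1: "L2 L (p 1 t)" and Lp2: "L2 L (p 2 t)" and Lp3: "L2 L (p 3 t)"
    and Lp4: "L2 L (p 4 t)" using L2p t by auto
  have Lq0: "L2 L (q 0 t)" and Lq1: "L2 L (q 1 t)" and Lq2: "L2 L (q 2 t)" using L2q t by auto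
  have Lr: "L2 L (r t)" using L2r t by auto
  have wp01: "weak_deriv L (p 0 t) (p 1 t)" using wdp[OF t, of 0] by (simp add: numeral_eq_Suc)
  have wp12: "weak_deriv L (p 1 t) (p 2 t)" using wdp[OF t, of 1] by (simp add: numeral_eq_Suc)
  have wp23: "weak_deriv L (p 2 t) (p 3 t)" using wdp[OF t, of 2] by (simp add: numeral_eq_Suc)
  have wp34: "weak_deriv L (p 3 t) (p 4 t)" using wdp[OF t, of 3] by (simp add: numeral_eq_Suc)
  have wq01: "weak_deriv L (q 0 t) (q 1 t)" using wdq[OF t, of 0] by (simp add: numeral_eq_Suc)
  have wq12: "weak_deriv L (q 1 t) (q 2 t)" using wdq[OF t, of 1] by (simp add: numeral_eq_Suc)
  note bc = bcs[OF t]
  define K where "K = - f t / \<sigma>"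
  define I1 where "I1 = integral\<^sup>L (NL L) (q 1 t)"
  define J1 where "J1 = integral\<^sup>L (NL L) (p 1 t)"
  have i1: "ip L (q 0 t) (p 2 t) + ip L (q 1 t) (p 1 t) = 0 * I1"
    unfolding I1_def by (rule IBP[OF pos(1) wq01 wp12 Lq0 Lq1 Lp1 Lp2 contp1[OF t]]) (use bc in auto)
  have i2: "ip L (q 0 t) (p 4 t) + ip L (q 1 t) (p 3 t) = K * I1"
    unfolding I1_def K_def by (rule IBP[OF pos(1) wq01 wp34 Lq0 Lq1 Lp3 Lp4 contp3[OF t]]) (use bc in auto)
  have i3: "ip L (p 2 t) (q 2 t) + ip L (p 3 t) (q 1 t) = 0 * integral\<^sup>L (NL L) (p 3 t)"
    by (rule IBP[OF pos(1) wp23 wq12 Lp2 Lp3 Lq1 Lq2 contq1[OF t]]) (use bc in auto)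
  have i4: "ip L (q 0 t) (q 2 t) + ip L (q 1 t) (q 1 t) = 0 * I1"
    unfolding I1_def by (rule IBP[OF pos(1) wq01 wq12 Lq0 Lq1 Lq1 Lq2 contq1[OF t]]) (use bc in auto)
  have i5: "ip L (p 0 t) (p 2 t) + ip L (p 1 t) (p 1 t) = 0 * J1"
    unfolding J1_def by (rule IBP[OF pos(1) wp01 wp12 Lp0 Lp1 Lp1 Lp2 contp1[OF t]]) (use bc in auto)
  have i6: "ip L (p 0 t) (p 4 t) + ip L (p 1 t) (p 3 t) = K * J1"
    unfolding J1_def K_def by (rule IBP[OF pos(1) wp01 wp34 Lp0 Lp1 Lp3 Lp4 contp3[OF t]]) (use bc in auto)
  have i7: "ip L (p 2 t) (p 2 t) + ip L (p 3 t) (p 1 t) = 0 * integral\<^sup>L (NL L) (p 3 t)"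
    by (rule IBP[OF pos(1) wp23 wp12 Lp2 Lp3 Lp1 Lp2 contp1[OF t]]) (use bc in auto)
  have i8: "ip L (p 0 t) (q 2 t) + ip L (p 1 t) (q 1 t) = 0 * J1"
    unfolding J1_def by (rule IBP[OF pos(1) wp01 wq12 Lp0 Lp1 Lq1 Lq2 contq1[OF t]]) (use bc in auto)
  have rq: "ip L (q 0 t) (r t) = g * hs * ip L (q 0 t) (p 2 t) - \<sigma> * hs * ip L (q 0 t) (p 4 t)
      + \<mu> * ip L (q 0 t) (q 2 t) - \<kappa> * ip L (q 0 t) (q 0 t)"
    by (rule ip_r_expand[OF aeq[OF t] Lp2 Lp4 Lq2 Lq0 Lq0 Lr])
  have rp: "ip L (p 0 t) (r t) = g * hs * ip L (p 0 t) (p 2 t) - \<sigma> * hs * ip L (p 0 t) (p 4 t)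
      + \<mu> * ip L (p 0 t) (q 2 t) - \<kappa> * ip L (p 0 t) (q 0 t)"
    by (rule ip_r_expand[OF aeq[OF t] Lp2 Lp4 Lq2 Lq0 Lp0 Lr])
  have c1: "ip L (r t) (q 0 t) = ip L (q 0 t) (r t)" by (rule ip_comm)
  have c2: "ip L (q 1 t) (p 1 t) = ip L (p 1 t) (q 1 t)" by (rule ip_comm)
  have c3: "ip L (q 2 t) (p 2 t) = ip L (p 2 t) (q 2 t)" by (rule ip_comm)
  have c4: "ip L (q 0 t) (p 0 t) = ip L (p 0 t) (q 0 t)" by (rule ip_comm)
  have c5: "ip L (q 1 t) (p 3 t) = ip L (p 3 t) (q 1 t)" by (rule ip_comm)
  have c6: "ip L (p 1 t) (p 3 t) = ip L (p 3 t) (p 1 t)" by (rule ip_comm)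
  have e1: "ip L (q 0 t) (p 2 t) = - ip L (p 1 t) (q 1 t)" using i1 c2 by simp
  have e2: "ip L (q 0 t) (p 4 t) = K * I1 + ip L (p 2 t) (q 2 t)" using i2 i3 c5 by simp
  have e3: "ip L (q 0 t) (q 2 t) = - ip L (q 1 t) (q 1 t)" using i4 by simp
  have e4: "ip L (p 0 t) (p 2 t) = - ip L (p 1 t) (p 1 t)" using i5 by simp
  have e5: "ip L (p 0 t) (p 4 t) = K * J1 + ip L (p 2 t) (p 2 t)" using i6 i7 c6 by simp
  have e6: "ip L (p 0 t) (q 2 t) = - ip L (p 1 t) (q 1 t)" using i8 by simp
  have sK: "\<sigma> * hs * K = - hs * f t" unfolding K_def using pos by simp
  show ?thesis
    unfolding Vd_def c1 c2 c3 c4 rq rp e1 e2 e3 e4 e5 e6 I1_def[symmetric] J1_def[symmetric]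
    using sK by (simp add: algebra_simps)
qed


lemma alg_at:
  assumes s: "0 \<le> s"
  shows "Vf (eps5 L hs g \<mu>) s \<le> Mx5 hs g \<mu> \<sigma> \<kappa> * (ip L (p 0 s) (p 0 s) + ip L (p 1 s) (p 1 s) + ip L (p 2 s) (p 2 s) + ip L (q 0 s) (q 0 s))"
    and "m5 L hs g \<sigma> * (ip L (p 0 s) (p 0 s) + ip L (p 1 s) (p 1 s) + ip L (p 2 s) (p 2 s) + ip L (q 0 s) (q 0 s)) \<le> Vf (eps5 L hs g \<mu>) s"
    and "Vd (eps5 L hs g \<mu>) s \<le> - gam5 L hs g \<mu> \<sigma> \<kappa> * Vf (eps5 L hs g \<mu>) s + C5 L hs g \<mu> * (f s)^2"
proof -
  note cp = consts_pos[OF pos]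
  have Lp0: "L2 L (p 0 s)" and Lp1: "L2 L (p 1 s)" and Lp2: "L2 L (p 2 s)" using L2p s by auto
  have Lq0: "L2 L (q 0 s)" and Lq1: "L2 L (q 1 s)" using L2q s by auto
  have wp01: "weak_deriv L (p 0 s) (p 1 s)" using wdp[OF s, of 0] by (simp add: numeral_eq_Suc)
  have wq01: "weak_deriv L (q 0 s) (q 1 s)" using wdq[OF s, of 0] by (simp add: numeral_eq_Suc)
  have pA0: "ip L (p 0 s) (p 0 s) \<le> L^2 * ip L (p 1 s) (p 1 s)"
    by (rule poincare[OF pos(1) wp01 Lp0 Lp1]) (use means[OF s] in simp)
  have pB: "ip L (q 0 s) (q 0 s) \<le> L^2 * ip L (q 1 s) (q 1 s)"
    by (rule poincare[OF pos(1) wq01 Lq0 Lq1]) (use means[OF s] in simp)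
  have bI: "\<bar>integral\<^sup>L (NL L) (q 1 s)\<bar> \<le> sqrt L * sqrt (ip L (q 1 s) (q 1 s))"
    using int_abs_bound[OF _ Lq1] pos(1) by (simp add: norm2_ip)
  have bJ: "\<bar>integral\<^sup>L (NL L) (p 1 s)\<bar> \<le> sqrt L * sqrt (ip L (p 1 s) (p 1 s))"
    using int_abs_bound[OF _ Lp1] pos(1) by (simp add: norm2_ip)
  have bX: "\<bar>ip L (p 0 s) (q 0 s)\<bar> \<le> (ip L (p 0 s) (p 0 s) + ip L (q 0 s) (q 0 s)) / 2"
  proof -
    have "\<bar>ip L (p 0 s) (q 0 s)\<bar> \<le> sqrt (ip L (p 0 s) (p 0 s)) * sqrt (ip L (q 0 s) (q 0 s))"
      using ip_CS[OF Lp0 Lq0] by (simp add: norm2_ip)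
    also have "\<dots> \<le> (ip L (p 0 s) (p 0 s) + ip L (q 0 s) (q 0 s)) / 2"
      by (rule sqrt_prod_le) (simp_all add: ip_self_nonneg)
    finally show ?thesis .
  qed
  have gh: "0 < g * hs" "0 < \<sigma> * hs" using pos by simp_all
  note EA12 = energy_alg(1,2)[where L=L and ?c2.0="g * hs" and sh="\<sigma> * hs" and \<mu>=\<mu> and \<kappa>=\<kappa> and hs=hs
      and \<epsilon>="eps5 L hs g \<mu>" and ?A0.0="ip L (p 0 s) (p 0 s)" and ?A1.0="ip L (p 1 s) (p 1 s)"
      and ?A2.0="ip L (p 2 s) (p 2 s)" and B="ip L (q 0 s) (q 0 s)" and ?Q1.0="ip L (q 1 s) (q 1 s)"
      and X="ip L (p 0 s) (q 0 s)" and ?I1.0="integral\<^sup>L (NL L) (q 1 s)" and ?J1.0="integral\<^sup>L (NL L) (p 1 s)",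
      OF pos(1) gh pos(4) pos(6) pos(2) cp(1) cp(2) cp(3) cp(4)
         ip_self_nonneg ip_self_nonneg ip_self_nonneg ip_self_nonneg ip_self_nonneg pA0 pB bI bJ bX]
  note EA3 = energy_alg(3)[where L=L and ?c2.0="g * hs" and sh="\<sigma> * hs" and \<mu>=\<mu> and \<kappa>=\<kappa> and hs=hs
      and \<epsilon>="eps5 L hs g \<mu>" and ?A0.0="ip L (p 0 s) (p 0 s)" and ?A1.0="ip L (p 1 s) (p 1 s)"
      and ?A2.0="ip L (p 2 s) (p 2 s)" and B="ip L (q 0 s) (q 0 s)" and ?Q1.0="ip L (q 1 s) (q 1 s)"
      and X="ip L (p 0 s) (q 0 s)" and ?I1.0="integral\<^sup>L (NL L) (q 1 s)" and ?J1.0="integral\<^sup>L (NL L) (p 1 s)"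
      and F="f s",
      OF pos(1) gh pos(4) pos(6) pos(2) cp(1) cp(2) cp(3) cp(4)
         ip_self_nonneg ip_self_nonneg ip_self_nonneg ip_self_nonneg ip_self_nonneg pA0 pB bI bJ bX]
  show "Vf (eps5 L hs g \<mu>) s \<le> Mx5 hs g \<mu> \<sigma> \<kappa> * (ip L (p 0 s) (p 0 s) + ip L (p 1 s) (p 1 s) + ip L (p 2 s) (p 2 s) + ip L (q 0 s) (q 0 s))"
    using EA12(1) unfolding Vf_def Mx5_def by (simp add: algebra_simps)
  show "m5 L hs g \<sigma> * (ip L (p 0 s) (p 0 s) + ip L (p 1 s) (p 1 s) + ip L (p 2 s) (p 2 s) + ip L (q 0 s) (q 0 s)) \<le> Vf (eps5 L hs g \<mu>) s"
    using EA12(2) unfolding Vf_def m5_def by (simp add: algebra_simps)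
  show "Vd (eps5 L hs g \<mu>) s \<le> - gam5 L hs g \<mu> \<sigma> \<kappa> * Vf (eps5 L hs g \<mu>) s + C5 L hs g \<mu> * (f s)^2"
    using EA3 unfolding energy_identity[OF s] Vf_def gam5_def del5_def Mx5_def C5_def
    by (simp add: algebra_simps)
qed


lemma final_bound:
  assumes t: "0 \<le> t"
  shows "sqrt ((norm2 L (p 0 t))^2 + (norm2 L (p 1 t))^2 + (norm2 L (p 2 t))^2 + (norm2 L (q 0 t))^2)
    \<le> M5 L hs g \<mu> \<sigma> \<kappa> * exp (- lam5 L hs g \<mu> \<sigma> \<kappa> * t) *
        sqrt ((norm2 L (p 0 0))^2 + (norm2 L (p 1 0))^2 + (norm2 L (p 2 0))^2 + (norm2 L (q 0 0))^2)
      + G5 L hs g \<mu> \<sigma> \<kappa> * (SUP s\<in>{0..t}. exp (- lam5 L hs g \<mu> \<sigma> \<kappa> * (t - s)) * \<bar>f s\<bar>)"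
proof -
  note cp = consts_pos[OF pos]
  define \<gamma> where "\<gamma> = gam5 L hs g \<mu> \<sigma> \<kappa>"
  define C where "C = C5 L hs g \<mu>"
  define m where "m = m5 L hs g \<sigma>"
  define Mx where "Mx = Mx5 hs g \<mu> \<sigma> \<kappa>"
  define lam where "lam = lam5 L hs g \<mu> \<sigma> \<kappa>"
  define V where "V = Vf (eps5 L hs g \<mu>)"
  define P2 where "P2 = (\<lambda>s. ip L (p 0 s) (p 0 s) + ip L (p 1 s) (p 1 s) + ip L (p 2 s) (p 2 s) + ip L (q 0 s) (q 0 s))"
  define S where "S = (SUP s\<in>{0..t}. exp (- lam * (t - s)) * \<bar>f s\<bar>)"
  have g0: "0 < \<gamma>" and C0: "0 \<le> C" and m0: "0 < m" and Mx0: "0 < Mx" and lam0: "lam = \<gamma> / 4"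
    using cp unfolding \<gamma>_def C_def m_def Mx_def lam_def lam5_def by auto
  have P2nn: "0 \<le> P2 s" for s unfolding P2_def by (intro add_nonneg_nonneg ip_self_nonneg)
  have cf: "continuous_on {0..t} (\<lambda>s. exp (- lam * (t - s)) * \<bar>f s\<bar>)"
    using continuous_on_subset[OF fc, of "{0..t}"] by (intro continuous_intros) auto
  have bdd: "bdd_above ((\<lambda>s. exp (- lam * (t - s)) * \<bar>f s\<bar>) ` {0..t})"
    by (rule bounded_imp_bdd_above, rule compact_imp_bounded, rule compact_continuous_image[OF cf compact_Icc])
  have Sb: "exp (- lam * (t - s)) * \<bar>f s\<bar> \<le> S" if "s \<in> {0..t}" for s
    unfolding S_def by (rule cSUP_upper[OF that bdd])
  have S0: "0 \<le> S" using Sb[of t] t by simp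
  have comp: "V t \<le> exp (- \<gamma> * t) * V 0 + 2 * C * S^2 / \<gamma>"
  proof (rule comparison[where V'="Vd (eps5 L hs g \<mu>)" and f=f])
    show "\<And>s. 0 \<le> s \<Longrightarrow> (V has_real_derivative Vd (eps5 L hs g \<mu>) s) (at s within {0..})"
      unfolding V_def using dV by simp
    show "\<And>s. 0 \<le> s \<Longrightarrow> Vd (eps5 L hs g \<mu>) s \<le> - \<gamma> * V s + C * (f s)^2"
      unfolding V_def \<gamma>_def C_def using alg_at(3) by simp
    show "\<And>s. s \<in> {0..t} \<Longrightarrow> exp (- (\<gamma> / 4) * (t - s)) * \<bar>f s\<bar> \<le> S"
      using Sb lam0 by simp
  qed (use g0 C0 t S0 in auto)
  have lowt: "m * P2 t \<le> V t" unfolding m_def P2_def V_def using alg_at(2)[OF t] by simp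
  have up0: "V 0 \<le> Mx * P2 0" unfolding Mx_def P2_def V_def using alg_at(1)[of 0] by simp
  have "exp (- \<gamma> * t) * V 0 \<le> exp (- \<gamma> * t) * (Mx * P2 0)"
    by (rule mult_left_mono[OF up0]) simp
  then have "m * P2 t \<le> exp (- \<gamma> * t) * (Mx * P2 0) + 2 * C * S^2 / \<gamma>"
    using lowt comp by linarith
  then have P2t: "P2 t \<le> (Mx / m) * exp (- \<gamma> * t) * P2 0 + (2 * C / (\<gamma> * m)) * S^2"
    using m0 g0 by (simp add: field_simps)
  have ex: "exp (- \<gamma> * t) = (exp (- \<gamma> * t / 2))^2"
    by (simp add: exp_double[symmetric] power2_eq_square exp_add[symmetric])
  have "sqrt (P2 t) \<le> sqrt ((Mx / m) * exp (- \<gamma> * t) * P2 0 + (2 * C / (\<gamma> * m)) * S^2)"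
    by (rule real_sqrt_le_mono[OF P2t])
  also have "\<dots> \<le> sqrt ((Mx / m) * exp (- \<gamma> * t) * P2 0) + sqrt ((2 * C / (\<gamma> * m)) * S^2)"
    by (rule sqrt_add_le_add_sqrt) (use m0 Mx0 g0 C0 P2nn in auto)
  also have "sqrt ((Mx / m) * exp (- \<gamma> * t) * P2 0) = sqrt (Mx / m) * exp (- \<gamma> * t / 2) * sqrt (P2 0)"
  proof -
    have a: "sqrt ((Mx / m) * exp (- \<gamma> * t) * P2 0) = sqrt (Mx / m) * sqrt (exp (- \<gamma> * t)) * sqrt (P2 0)"
      by (simp only: real_sqrt_mult)
    have b: "sqrt (exp (- \<gamma> * t)) = exp (- \<gamma> * t / 2)"
      by (rule real_sqrt_unique) (use ex in auto)
    show ?thesis unfolding a b ..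
  qed
  also have "sqrt ((2 * C / (\<gamma> * m)) * S^2) = sqrt (2 * C / (\<gamma> * m)) * S"
  proof -
    have "sqrt ((2 * C / (\<gamma> * m)) * S^2) = sqrt (2 * C / (\<gamma> * m)) * sqrt (S^2)"
      by (simp only: real_sqrt_mult)
    then show ?thesis using S0 by simp
  qed
  also have "sqrt (Mx / m) * exp (- \<gamma> * t / 2) * sqrt (P2 0) \<le> sqrt (Mx / m) * exp (- lam * t) * sqrt (P2 0)"
  proof -
    have lt: "0 \<le> lam * t" using lam0 g0 t by simp
    have "- \<gamma> * t / 2 = - 2 * (lam * t)" using lam0 by simp
    then have "- \<gamma> * t / 2 \<le> - lam * t" using lt by linarith
    then have "exp (- \<gamma> * t / 2) \<le> exp (- lam * t)" by simp
    then show ?thesis using Mx0 m0 P2nn[of 0] by (intro mult_right_mono mult_left_mono) auto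
  qed
  also have "sqrt (2 * C / (\<gamma> * m)) * S \<le> (sqrt (2 * C / (\<gamma> * m)) + 1) * S"
    using S0 by (simp add: distrib_right)
  finally have fin: "sqrt (P2 t) \<le> sqrt (Mx / m) * exp (- lam * t) * sqrt (P2 0) + (sqrt (2 * C / (\<gamma> * m)) + 1) * S"
    by simp
  show ?thesis
    using fin unfolding P2_def M5_def G5_def S_def lam_def \<gamma>_def C_def m_def Mx_def
    by (simp add: norm2_sq)
qed

end

theorem theorem5:
  fixes L hs g \<mu> \<sigma> \<kappa> :: real
  assumes "L > 0" "hs > 0" "g > 0" "\<mu> > 0" "\<sigma> > 0" "\<kappa> \<ge> 0"
  shows "\<exists>M lam \<Gamma>. M > 0 \<and> lam > 0 \<and> \<Gamma> > 0 \<and>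
    (\<forall>(f :: real \<Rightarrow> real) (p :: nat \<Rightarrow> real \<Rightarrow> real \<Rightarrow> real)
       (q :: nat \<Rightarrow> real \<Rightarrow> real \<Rightarrow> real) (r :: real \<Rightarrow> real \<Rightarrow> real).
      continuous_on {0..} f
      \<and> (\<forall>t\<ge>0.
           (\<forall>i\<le>4. in_L2 L (p i t)) \<and> (\<forall>i<4. weak_deriv L (p i t) (p (Suc i) t))
         \<and> continuous_on {0..L} (p 1 t) \<and> continuous_on {0..L} (p 3 t)
         \<and> (\<forall>i\<le>2. in_L2 L (q i t)) \<and> (\<forall>i<2. weak_deriv L (q i t) (q (Suc i) t))
         \<and> continuous_on {0..L} (q 1 t)
         \<and> in_L2 L (r t)
         \<and> p 1 t 0 = 0 \<and> p 1 t L = 0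
         \<and> q 1 t 0 = 0 \<and> q 1 t L = 0
         \<and> p 3 t 0 = - f t / \<sigma> \<and> p 3 t L = - f t / \<sigma>
         \<and> (AE x in lborel. 0 < x \<and> x < L \<longrightarrow>
              r t x = (sqrt (g * hs))^2 * p 2 t x - \<sigma> * hs * p 4 t x
                      + \<mu> * q 2 t x - \<kappa> * q 0 t x)
         \<and> (LINT x:{0..L}|lborel. p 0 t x) = 0
         \<and> (LINT x:{0..L}|lborel. q 0 t x) = 0
         \<and> ((\<lambda>s. Hk_dist L 4 (\<lambda>i. p i s) (\<lambda>i. p i t)) \<longlongrightarrow> 0) (at t within {0..})
         \<and> ((\<lambda>s. Hk_dist L 2 (\<lambda>i x. (p i s x - p i t x) / (s - t)) (\<lambda>i. q i t)) \<longlongrightarrow> 0)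
              (at t within {0..})
         \<and> ((\<lambda>s. Hk_dist L 2 (\<lambda>i. q i s) (\<lambda>i. q i t)) \<longlongrightarrow> 0) (at t within {0..})
         \<and> ((\<lambda>s. norm2 L (\<lambda>x. (q 0 s x - q 0 t x) / (s - t) - r t x)) \<longlongrightarrow> 0)
              (at t within {0..})
         \<and> ((\<lambda>s. norm2 L (\<lambda>x. r s x - r t x)) \<longlongrightarrow> 0) (at t within {0..}))
      \<longrightarrow> (\<forall>t\<ge>0.
            sqrt ((norm2 L (p 0 t))^2 + (norm2 L (p 1 t))^2 + (norm2 L (p 2 t))^2
                  + (norm2 L (q 0 t))^2)
            \<le> M * exp (- lam * t) *
                sqrt ((norm2 L (p 0 0))^2 + (norm2 L (p 1 0))^2 + (norm2 L (p 2 0))^2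
                      + (norm2 L (q 0 0))^2)
              + \<Gamma> * (SUP s\<in>{0..t}. exp (- lam * (t - s)) * \<bar>f s\<bar>)))"
proof -
  note cp = consts_pos[OF assms]
  show ?thesis
    apply (rule exI[of _ "M5 L hs g \<mu> \<sigma> \<kappa>"], rule exI[of _ "lam5 L hs g \<mu> \<sigma> \<kappa>"],
        rule exI[of _ "G5 L hs g \<mu> \<sigma> \<kappa>"])
    apply (intro conjI)
       apply (rule cp(10))
      apply (rule cp(11))
     apply (rule cp(12))
    apply (intro allI impI)
    apply (erule conjE)
    apply (rule final_bound[OF assms])
      apply assumption+
    done
qed

end
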